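(* Let $u=u(x)$ be a fixed (time-independent) analytic change of coordinates on a domain in $\mathbb C^n$. For each $t$ let $\widetilde L_i(u,t)=\partial/\partial u^i+q_i(u,t)-\hbar^{-1}e_i$, $i=1,\dots,n$, be pairwise commuting, and put $\widetilde L_\alpha(x,t)=\sum_i\frac{\partial u^i}{\partial x^\alpha}\widetilde L_i(u(x),t)$ (so $\widetilde L_\alpha=\partial/\partial x^\alpha+q_\alpha(x,t)-\hbar^{-1}a_\alpha(x)$ with $a_\alpha=diag(\partial u^1/\partial x^\alpha,\dots,\partial u^n/\partial x^\alpha)$). Then, for $b\in Diag[\hbar^{-1}]$, $\{\widetilde L_i(u,t)\}$ satisfies $$\frac{\partial\widetilde L_i}{\partial t}=[\widetilde\varphi(b)_{\le0},\widetilde L_i]\quad\text{for all }i$$ if and only if $\{\widetilde L_\alpha(x,t)\}$ satisfies $$\frac{\partial\widetilde L_\alpha}{\partial t}=[\widetilde\varphi(b)_{\le0},\widetilde L_\alpha]\quad\text{for all }\alpha$$ with the same $b$, where in each case $\widetilde\varphi(b)=\widetilde Tb\widetilde T^{-1}$ with $\widetilde T$ the dressing transformation of the respective family.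
   Context: $e_i$ is the matrix unit $(e_i)_{jk}=\delta_{ij}\delta_{ik}$; $q_i,q_\alpha$ are $Mat(n,\mathbb C)$-valued functions; $Diag$ denotes diagonal matrices and $Diag[\hbar^{-1}]$ polynomials in $\hbar^{-1}$ with constant diagonal coefficients. Dressing transformation of $\{\widetilde L_i(u,t)\}$: for each $t$, a formal series $\widetilde T(\hbar,u,t)=Id+\sum_{k\ge1}\hbar^k\widetilde T_k$ with $\widetilde T^{-1}\widetilde L_i\widetilde T=\partial/\partial u^i-e_i\hbar^{-1}+h_i$, $h_i\in Diag[[\hbar]]$ for all $i$; dressing transformation of $\{\widetilde L_\alpha(x,t)\}$: $\widetilde T(\hbar,x,t)=Id+O(\hbar)$ with $\widetilde T^{-1}\widetilde L_\alpha\widetilde T=\partial/\partial x^\alpha-a_\alpha\hbar^{-1}+h_\alpha$, $h_\alpha\in Diag[[\hbar]]$ for all $\alpha$. Such $\widetilde T$ is unique up to right multiplication by diagonal series, so $\widetilde\varphi(b)$ is well defined. For a Laurent series $v=\sum_lv_l\hbar^l$, $v_{\le k}=\sum_{l\le k}v_l\hbar^l$. Conjugation: $T^{-1}(\partial+A)T=\partial+T^{-1}\partial T+T^{-1}AT$; $[\partial+A,M]=\partial M+[A,M]$; $\partial\widetilde L/\partial t$ means the time derivative of the potential term. *)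

theory Defs
  imports "HOL-Analysis.Analysis"
begin

text \<open>Matrices are complex n x n matrices indexed by a finite type 'n; the same
type indexes the coordinates of C^n.  A formal Laurent series in hbar with matrix
coefficients (at a fixed point) is a function int => matrix, the value at k being
the coefficient of hbar^k.\<close>

type_synonym 'n cmat = "complex^'n^'n"
type_synonym 'n ser = "int \<Rightarrow> complex^'n^'n"

definition upd :: "complex^('n::finite) \<Rightarrow> 'n \<Rightarrow> complex \<Rightarrow> complex^'n" where
  "upd p i z = (\<chi> j. if j = i then z else p $ j)"

text \<open>Holomorphic function of several complex variables on an open set
(continuous and holomorphic in each variable separately; Osgood).\<close>
definition holo_n :: "(complex^('n::finite) \<Rightarrow> complex) \<Rightarrow> (complex^('n::finite)) set \<Rightarrow> bool" where
  "holo_n f S \<longleftrightarrow> open S \<and> continuous_on S f \<and>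
     (\<forall>p\<in>S. \<forall>i. (\<lambda>z. f (upd p i z)) field_differentiable (at (p $ i)))"

definition holo_mat :: "(complex^('n::finite) \<Rightarrow> ('n::finite) cmat) \<Rightarrow> (complex^('n::finite)) set \<Rightarrow> bool" where
  "holo_mat f S \<longleftrightarrow> (\<forall>a b. holo_n (\<lambda>p. f p $ a $ b) S)"

definition pd_sc :: "(complex^('n::finite) \<Rightarrow> complex) \<Rightarrow> 'n \<Rightarrow> complex^('n::finite) \<Rightarrow> complex" where
  "pd_sc f i p = deriv (\<lambda>z. f (upd p i z)) (p $ i)"

definition pd :: "(complex^('n::finite) \<Rightarrow> ('n::finite) cmat) \<Rightarrow> 'n \<Rightarrow> complex^('n::finite) \<Rightarrow> ('n::finite) cmat" where
  "pd f i p = (\<chi> a b. pd_sc (\<lambda>p'. f p' $ a $ b) i p)"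

definition munit :: "'n \<Rightarrow> ('n::finite) cmat" where
  "munit i = (\<chi> j k. if j = i \<and> k = i then 1 else 0)"

definition sc :: "complex \<Rightarrow> ('n::finite) cmat \<Rightarrow> ('n::finite) cmat" where
  "sc c M = (\<chi> a b. c * M $ a $ b)"

definition is_diag :: "('n::finite) cmat \<Rightarrow> bool" where
  "is_diag M \<longleftrightarrow> (\<forall>a b. a \<noteq> b \<longrightarrow> M $ a $ b = 0)"

definition lbdd :: "('n::finite) ser \<Rightarrow> bool" where
  "lbdd s \<longleftrightarrow> (\<exists>N. \<forall>k<N. s k = 0)"

definition smul :: "('n::finite) ser \<Rightarrow> ('n::finite) ser \<Rightarrow> ('n::finite) ser" where
  "smul a b = (\<lambda>k. \<Sum>j\<in>{j. a j \<noteq> 0 \<and> b (k - j) \<noteq> 0}. a j ** b (k - j))"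

definition sone :: "('n::finite) ser" where
  "sone = (\<lambda>k. if k = 0 then mat 1 else 0)"

definition sinv :: "('n::finite) ser \<Rightarrow> ('n::finite) ser" where
  "sinv a = (SOME c. lbdd c \<and> smul a c = sone \<and> smul c a = sone)"

definition trunc0 :: "('n::finite) ser \<Rightarrow> ('n::finite) ser" where
  "trunc0 s = (\<lambda>k. if k \<le> 0 then s k else 0)"

text \<open>Potential of the operator  d/dp^j + Q_j - hbar^{-1} E_j  as a Laurent series.\<close>
definition pot :: "('n::finite) cmat \<Rightarrow> ('n::finite) cmat \<Rightarrow> ('n::finite) ser" where
  "pot Q E = (\<lambda>k. if k = 0 then Q else if k = -1 then - E else 0)"

text \<open>Family of operators L_j = d/dp^j + Q j p - hbar^{-1} E j p  on the open set S.
Pairwise commutation [L_i, L_j] = 0, written out via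
[d_i + A, d_j + B] = d_i B - d_j A + [A, B].\<close>
definition commuting ::
  "(complex^('n::finite)) set \<Rightarrow> ('n \<Rightarrow> complex^('n::finite) \<Rightarrow> ('n::finite) cmat) \<Rightarrow> ('n \<Rightarrow> complex^('n::finite) \<Rightarrow> ('n::finite) cmat) \<Rightarrow> bool" where
  "commuting S Q E \<longleftrightarrow> (\<forall>i j. \<forall>p\<in>S. \<forall>k.
      pd (\<lambda>p'. pot (Q j p') (E j p') k) i p - pd (\<lambda>p'. pot (Q i p') (E i p') k) j p
      + smul (pot (Q i p) (E i p)) (pot (Q j p) (E j p)) k
      - smul (pot (Q j p) (E j p)) (pot (Q i p) (E i p)) k = 0)"

text \<open>T (a series with function coefficients T k p) is a dressing transformation of the
family: T = Id + O(hbar) with analytic coefficients, and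
T^{-1} L_j T = d/dp^j - hbar^{-1} E_j + h_j with h_j in Diag[[hbar]], for all j.
Since T is invertible this is written as L_j o T = T o (d_j - hbar^{-1}E_j + h_j),
i.e.  d_j T + A_j T = T (-hbar^{-1} E_j + h_j).\<close>
definition dressing ::
  "(complex^('n::finite)) set \<Rightarrow> ('n \<Rightarrow> complex^('n::finite) \<Rightarrow> ('n::finite) cmat) \<Rightarrow> ('n \<Rightarrow> complex^('n::finite) \<Rightarrow> ('n::finite) cmat)
   \<Rightarrow> (int \<Rightarrow> complex^('n::finite) \<Rightarrow> ('n::finite) cmat) \<Rightarrow> bool" where
  "dressing S Q E T \<longleftrightarrow>
     (\<forall>p\<in>S. T 0 p = mat 1) \<and> (\<forall>k<0. \<forall>p\<in>S. T k p = 0) \<and> (\<forall>k. holo_mat (T k) S) \<and>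
     (\<exists>h :: 'n \<Rightarrow> int \<Rightarrow> complex^('n::finite) \<Rightarrow> ('n::finite) cmat.
        (\<forall>j k p. is_diag (h j k p)) \<and> (\<forall>j. \<forall>k<0. \<forall>p. h j k p = 0) \<and>
        (\<forall>j. \<forall>p\<in>S. \<forall>k.
           pd (\<lambda>p'. T k p') j p + smul (pot (Q j p) (E j p)) (\<lambda>l. T l p) k
           = smul (\<lambda>l. T l p) (\<lambda>l. (if l = -1 then - E j p else 0) + h j l p) k))"

definition phi :: "(int \<Rightarrow> complex^('n::finite) \<Rightarrow> ('n::finite) cmat) \<Rightarrow> ('n::finite) ser \<Rightarrow> complex^('n::finite) \<Rightarrow> ('n::finite) ser" where
  "phi T b p = smul (smul (\<lambda>k. T k p) b) (sinv (\<lambda>k. T k p))"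

text \<open>b in Diag[hbar^{-1}]: polynomial in hbar^{-1} with constant diagonal coefficients.\<close>
definition diag_poly_inv :: "('n::finite) ser \<Rightarrow> bool" where
  "diag_poly_inv b \<longleftrightarrow> (\<forall>k. is_diag (b k)) \<and> (\<forall>k>0. b k = 0) \<and> lbdd b"

text \<open>The flow  dL_j/dt = [phi(b)_{<=0}, L_j]  for all j, on S x Theta, where
Q j p t, T t k p depend on time t, and
[M, d_j + A] = - d_j M + M A - A M.  The left side is the time derivative of the
potential (only its hbar^0 coefficient Q_j depends on t).\<close>
definition flow ::
  "(complex^('n::finite)) set \<Rightarrow> complex set \<Rightarrow> ('n \<Rightarrow> complex^('n::finite) \<Rightarrow> complex \<Rightarrow> ('n::finite) cmat)
   \<Rightarrow> ('n \<Rightarrow> complex^('n::finite) \<Rightarrow> ('n::finite) cmat) \<Rightarrow> (complex \<Rightarrow> int \<Rightarrow> complex^('n::finite) \<Rightarrow> ('n::finite) cmat) \<Rightarrow> ('n::finite) ser \<Rightarrow> bool" where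
  "flow S Th Q E T b \<longleftrightarrow> (\<forall>j. \<forall>p\<in>S. \<forall>t\<in>Th.
     (let M = (\<lambda>p'. trunc0 (phi (T t) b p'));
          A = pot (Q j p t) (E j p);
          R = (\<lambda>k. - pd (\<lambda>p'. M p' k) j p + smul (M p) A k - smul A (M p) k)
      in (\<forall>a c. ((\<lambda>s. Q j p s $ a $ c) has_field_derivative (R 0 $ a $ c)) (at t))
         \<and> (\<forall>k. k \<noteq> 0 \<longrightarrow> R k = 0)))"

definition jac :: "(complex^('n::finite) \<Rightarrow> complex^('n::finite)) \<Rightarrow> 'n \<Rightarrow> 'n \<Rightarrow> complex^('n::finite) \<Rightarrow> complex" where
  "jac u i \<alpha> x = pd_sc (\<lambda>y. u y $ i) \<alpha> x"

definition Qx :: "(complex^('n::finite) \<Rightarrow> complex^('n::finite)) \<Rightarrow> ('n \<Rightarrow> complex^('n::finite) \<Rightarrow> complex \<Rightarrow> ('n::finite) cmat)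
   \<Rightarrow> ('n \<Rightarrow> complex^('n::finite) \<Rightarrow> complex \<Rightarrow> ('n::finite) cmat)" where
  "Qx u q = (\<lambda>\<alpha> x t. \<Sum>i\<in>UNIV. sc (jac u i \<alpha> x) (q i (u x) t))"

definition Ax :: "(complex^('n::finite) \<Rightarrow> complex^('n::finite)) \<Rightarrow> ('n \<Rightarrow> complex^('n::finite) \<Rightarrow> ('n::finite) cmat)" where
  "Ax u = (\<lambda>\<alpha> x. (\<chi> a c. if a = c then jac u a \<alpha> x else 0))"

end

theory Submission
  imports Defs "HOL-Complex_Analysis.Cauchy_Integral_Formula"
begin


lemma norm_axis_eq: "norm (axis i (x::complex) :: complex^'n) = norm x"
  unfolding norm_vec_def L2_set_def axis_def
  by (simp add: if_distrib[of "\<lambda>y. (norm y)^2"] cong: if_cong)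

lemma upd_nth [simp]: "upd p i z $ j = (if j = i then z else p $ j)"
  by (simp add: upd_def)
lemma upd_upd [simp]: "upd (upd p i a) i b = upd p i b"
  by (simp add: upd_def vec_eq_iff)
lemma upd_same [simp]: "upd p i (p$i) = p"
  by (simp add: upd_def vec_eq_iff)

lemma upd_near:
  fixes w p :: "complex^'n"
  shows "norm (upd w i z - p) \<le> norm (w - p) + norm (z - p$i)"
proof -
  have eq: "upd w i z - p = (upd w i (p$i) - p) + axis i (z - p$i)"
    by (simp add: vec_eq_iff axis_def)
  have "norm (upd w i (p$i) - p) \<le> norm (w - p)"
    by (rule norm_le_componentwise_cart) auto
  moreover have "norm (upd w i z - p) \<le> norm (upd w i (p$i) - p) + norm (axis i (z - p$i) :: complex^'n)"
    unfolding eq by (rule norm_triangle_ineq)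
  ultimately show ?thesis by (simp add: norm_axis_eq)
qed

lemma continuous_on_upd:
  "continuous_on S (\<lambda>x. upd (f x) i (g x))" if "continuous_on S f" "continuous_on S g"
    for f :: "_ \<Rightarrow> complex^'n"
proof -
  have "continuous_on S (\<lambda>x. if j = i then g x else f x $ j)" for j
    using that by (cases "j = i") (simp_all add: continuous_on_component)
  then have "continuous_on S (\<lambda>x. \<chi> j. if j = i then g x else f x $ j)"
    by (rule continuous_on_vec_lambda)
  then show ?thesis unfolding upd_def .
qed

lemma pf_complex: fixes x b c g :: complex shows "x \<noteq> c \<Longrightarrow> x \<noteq> b \<Longrightarrow> b \<noteq> c \<Longrightarrow> 1/(c-b) * (g/(x-c) - g/(x-b)) = g/((x-c)*(x-b))"
proof -
  assume a: "x \<noteq> c" "x \<noteq> b" "b \<noteq> c"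
  then have "x - c \<noteq> 0" "x - b \<noteq> 0" "c - b \<noteq> 0" by auto
  then show ?thesis by (simp add: divide_simps) (simp add: algebra_simps)
qed

lemma canc: fixes K x y c b :: complex assumes "K \<noteq> 0" shows "1/(c-b) * (K*x - K*y) / K = (x-y)/(c-b)"
  using assms by (simp add: right_diff_distrib[symmetric])

lemma osgood_K:
  fixes G :: "complex^'n \<Rightarrow> complex"
  assumes U: "open U" and cG: "continuous_on U G"
    and dG: "\<And>q j. q \<in> U \<Longrightarrow> (\<lambda>z. G (upd q j z)) field_differentiable at (q$j)"
    and pU: "p \<in> U"
  shows "\<exists>Q. isCont Q (p, p$i) \<and> Q (p, p$i) = pd_sc G i p \<and>
     eventually (\<lambda>wb. G (upd (fst wb) i (snd wb)) - G (upd (fst wb) i (p$i)) = (snd wb - p$i) * Q wb) (nhds (p, p$i))"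
proof -
  obtain e where e: "e > 0" "ball p e \<subseteq> U" using U pU open_contains_ball by blast
  define c where "c = p$i"
  define r where "r = e/2"
  have r: "r > 0" using e by (simp add: r_def)
  define H where "H = (\<lambda>wb \<zeta>. G (upd (fst wb) i \<zeta>) / ((\<zeta> - c) * (\<zeta> - snd wb)))"
  define Q where "Q = (\<lambda>wb. contour_integral (circlepath c r) (H wb) / (2 * complex_of_real pi * \<i>))"
  have inU: "upd w i \<zeta> \<in> U" if "norm (w - p) < e/4" "norm (\<zeta> - c) < 3*e/4" for w \<zeta>
  proof -
    have "norm (upd w i \<zeta> - p) < e" using upd_near[of w i \<zeta> p] that by (simp add: c_def)
    then show ?thesis using e by (auto simp: dist_norm norm_minus_commute)
  qed
  have gcont: "continuous_on (cball c r) (\<lambda>\<zeta>. G (upd w i \<zeta>))" if "norm (w - p) < e/4" for w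
  proof (rule continuous_on_compose2[OF cG])
    show "continuous_on (cball c r) (\<lambda>\<zeta>. upd w i \<zeta>)"
      by (intro continuous_on_upd continuous_intros)
    show "(\<lambda>\<zeta>. upd w i \<zeta>) ` cball c r \<subseteq> U"
      using that e by (auto intro!: inU simp: r_def dist_norm norm_minus_commute)
  qed
  have gholo: "(\<lambda>\<zeta>. G (upd w i \<zeta>)) holomorphic_on ball c (3*e/4)" if "norm (w - p) < e/4" for w
  proof -
    have "(\<lambda>z. G (upd w i z)) field_differentiable at \<zeta>" if "\<zeta> \<in> ball c (3*e/4)" for \<zeta>
      using dG[OF inU[OF \<open>norm (w - p) < e/4\<close>, of \<zeta>], of i] that
      by (simp add: dist_norm norm_minus_commute)
    then show ?thesis
      by (simp add: holomorphic_on_def field_differentiable_at_within)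
  qed
  have gholo': "(\<lambda>\<zeta>. G (upd w i \<zeta>)) holomorphic_on ball c r" if "norm (w - p) < e/4" for w
    by (rule holomorphic_on_subset[OF gholo[OF that]]) (use e in \<open>auto simp: r_def\<close>)
  have ident: "G (upd w i b) - G (upd w i c) = (b - c) * Q (w, b)"
    if w: "norm (w - p) < e/4" and b: "norm (b - c) < r" for w b
  proof (cases "b = c")
    case True then show ?thesis by simp
  next
    case False
    let ?g = "\<lambda>\<zeta>. G (upd w i \<zeta>)"
    have i1: "((\<lambda>\<zeta>. ?g \<zeta> / (\<zeta> - c)) has_contour_integral (2 * of_real pi * \<i> * ?g c)) (circlepath c r)"
      by (rule Cauchy_integral_circlepath[OF gcont[OF w] gholo'[OF w]]) (simp add: r)
    have i2: "((\<lambda>\<zeta>. ?g \<zeta> / (\<zeta> - b)) has_contour_integral (2 * of_real pi * \<i> * ?g b)) (circlepath c r)"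
      by (rule Cauchy_integral_circlepath[OF gcont[OF w] gholo'[OF w]]) (simp add: b)
    have i3: "((\<lambda>\<zeta>. 1/(c - b) * (?g \<zeta> / (\<zeta> - c) - ?g \<zeta> / (\<zeta> - b))) has_contour_integral
          (1/(c-b) * (2 * of_real pi * \<i> * ?g c - 2 * of_real pi * \<i> * ?g b))) (circlepath c r)"
      by (intro has_contour_integral_lmul has_contour_integral_diff i1 i2)
    have i4: "(H (w,b) has_contour_integral
          (1/(c-b) * (2 * of_real pi * \<i> * ?g c - 2 * of_real pi * \<i> * ?g b))) (circlepath c r)"
    proof (rule has_contour_integral_eq[OF i3])
      fix \<zeta> assume "\<zeta> \<in> path_image (circlepath c r)"
      then have z: "norm (\<zeta> - c) = r" using r by (simp add: dist_norm norm_minus_commute)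
      then have "\<zeta> \<noteq> c" using r by auto
      moreover have "\<zeta> \<noteq> b" using z b by auto
      ultimately show "1/(c - b) * (?g \<zeta> / (\<zeta> - c) - ?g \<zeta> / (\<zeta> - b)) = H (w,b) \<zeta>"
        using False pf_complex[of \<zeta> c b "?g \<zeta>"] unfolding H_def by simp
    qed
    have "Q (w,b) = 1/(c-b) * (2 * of_real pi * \<i> * ?g c - 2 * of_real pi * \<i> * ?g b) / (2 * complex_of_real pi * \<i>)"
      unfolding Q_def using contour_integral_unique[OF i4] by simp
    also have "\<dots> = (?g c - ?g b) / (c - b)"
      by (rule canc) simp
    finally have "Q (w,b) = (?g c - ?g b) / (c - b)" .
    moreover have "c - b \<noteq> 0" using False by simp
    ultimately show ?thesis by (simp add: field_simps)
  qed
  have Qp: "Q (p, c) = pd_sc G i p"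
  proof -
    have w: "norm (p - p) < e/4" using e by simp
    have "((\<lambda>\<zeta>. G (upd p i \<zeta>) / (\<zeta> - c) ^ Suc 1) has_contour_integral
        ((2 * pi * \<i>) / (fact 1) * (deriv ^^ 1) (\<lambda>\<zeta>. G (upd p i \<zeta>)) c)) (circlepath c r)"
      by (rule Cauchy_has_contour_integral_higher_derivative_circlepath[OF gcont[OF w] gholo'[OF w]])
        (simp add: r)
    then have "(H (p,c) has_contour_integral ((2 * pi * \<i>) * deriv (\<lambda>\<zeta>. G (upd p i \<zeta>)) c)) (circlepath c r)"
      by (simp add: H_def power2_eq_square)
    then show ?thesis unfolding Q_def pd_sc_def c_def[symmetric]
      using contour_integral_unique by fastforce
  qed
  define \<rho> where "\<rho> = e/16"
  have \<rho>: "\<rho> > 0" using e by (simp add: \<rho>_def)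
  define K where "K = cball (p,c) \<rho> \<times> sphere c r"
  have Kfacts: "norm (fst (fst x) - p) < e/4 \<and> norm (snd (fst x) - c) < r/2 \<and> norm (snd x - c) = r" if "x \<in> K" for x
  proof -
    obtain w b \<zeta> where x: "x = ((w,b),\<zeta>)" by (metis prod.collapse)
    have "dist w p \<le> dist (w,b) (p,c)" "dist b c \<le> dist (w,b) (p,c)"
      by (simp_all add: dist_Pair_Pair real_sqrt_sum_squares_ge1 real_sqrt_sum_squares_ge2)
    moreover have "dist (w,b) (p,c) \<le> \<rho>" "dist c \<zeta> = r" using that by (auto simp: K_def x dist_commute)
    ultimately have "dist w p \<le> \<rho>" "dist b c \<le> \<rho>" "dist \<zeta> c = r" by (auto simp: dist_commute)
    then have "norm (w - p) \<le> e/16" "norm (b - c) \<le> e/16" "norm (\<zeta> - c) = r"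
      by (simp_all add: dist_norm \<rho>_def)
    then show ?thesis using e unfolding x r_def by auto
  qed
  have Hcont: "continuous_on K (\<lambda>x. H (fst x) (snd x))"
  proof -
    have c1: "continuous_on K (\<lambda>x. G (upd (fst (fst x)) i (snd x)))"
    proof (rule continuous_on_compose2[OF cG])
      show "continuous_on K (\<lambda>x. upd (fst (fst x)) i (snd x))"
        by (intro continuous_on_upd continuous_intros)
      show "(\<lambda>x. upd (fst (fst x)) i (snd x)) ` K \<subseteq> U"
      proof safe
        fix x assume "x \<in> K"
        note kf = Kfacts[OF this]
        have "norm (snd x - c) < 3*e/4" using kf e by (simp add: r_def)
        then show "upd (fst (fst x)) i (snd x) \<in> U" using kf by (intro inU) auto
      qed
    qed
    have "(snd x - c) * (snd x - snd (fst x)) \<noteq> 0" if "x \<in> K" for x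
    proof -
      have "snd x \<noteq> c" using Kfacts[OF that] r by auto
      moreover have "snd x \<noteq> snd (fst x)"
      proof
        assume eq: "snd x = snd (fst x)"
        have "norm (snd (fst x) - c) < r/2" "norm (snd x - c) = r" using Kfacts[OF that] by auto
        then show False using r eq by simp
      qed
      ultimately show ?thesis by simp
    qed
    then show ?thesis unfolding H_def
      by (intro continuous_on_divide c1 continuous_intros) auto
  qed
  have ucont: "uniformly_continuous_on K (\<lambda>x. H (fst x) (snd x))"
    by (rule compact_uniformly_continuous[OF Hcont]) (simp add: K_def compact_Times)
  have ulim: "uniform_limit (sphere c r) H (H (p,c)) (at (p,c))"
    unfolding uniform_limit_iff
  proof (intro allI impI)
    fix \<epsilon> :: real assume "\<epsilon> > 0"
    then obtain d where d: "d > 0" "\<And>x x'. x \<in> K \<Longrightarrow> x' \<in> K \<Longrightarrow> dist x' x < d \<Longrightarrow>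
        dist (H (fst x') (snd x')) (H (fst x) (snd x)) < \<epsilon>"
      using ucont unfolding uniformly_continuous_on_def by metis
    have "eventually (\<lambda>wb. dist wb (p,c) < min d \<rho>) (at (p,c))"
      using d \<rho> unfolding eventually_at by (intro exI[of _ "min d \<rho>"]) auto
    then show "\<forall>\<^sub>F wb in at (p, c). \<forall>\<zeta>\<in>sphere c r. dist (H wb \<zeta>) (H (p, c) \<zeta>) < \<epsilon>"
    proof (rule eventually_mono)
      fix wb assume wb: "dist wb (p,c) < min d \<rho>"
      show "\<forall>\<zeta>\<in>sphere c r. dist (H wb \<zeta>) (H (p, c) \<zeta>) < \<epsilon>"
      proof
        fix \<zeta> assume z: "\<zeta> \<in> sphere c r"
        have "((p,c),\<zeta>) \<in> K" "(wb,\<zeta>) \<in> K" using z wb \<rho> by (auto simp: K_def dist_commute)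
        moreover have "dist (wb,\<zeta>) ((p,c),\<zeta>) < d" using wb by (simp add: dist_Pair_Pair)
        ultimately show "dist (H wb \<zeta>) (H (p, c) \<zeta>) < \<epsilon>" using d(2) by fastforce
      qed
    qed
  qed
  have integ: "\<forall>\<^sub>F wb in at (p,c). H wb contour_integrable_on (circlepath c r)"
  proof -
    have "eventually (\<lambda>wb. dist wb (p,c) < \<rho>) (at (p,c))"
      using \<rho> unfolding eventually_at by (intro exI[of _ "\<rho>"]) auto
    then show ?thesis
    proof (rule eventually_mono)
      fix wb assume wb: "dist wb (p,c) < \<rho>"
      have "continuous_on ((\<lambda>\<zeta>. (wb,\<zeta>)) ` sphere c r) (\<lambda>x. H (fst x) (snd x))"
        by (rule continuous_on_subset[OF Hcont]) (use wb in \<open>auto simp: K_def dist_commute\<close>)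
      then have "continuous_on (sphere c r) (\<lambda>\<zeta>. H (fst (wb,\<zeta>)) (snd (wb,\<zeta>)))"
        by (rule continuous_on_compose2[where g = "\<lambda>x. H (fst x) (snd x)"]) (auto intro: continuous_intros)
      then show "H wb contour_integrable_on (circlepath c r)"
        using r by (intro contour_integrable_continuous_circlepath) simp
    qed
  qed
  have lim: "((\<lambda>wb. contour_integral (circlepath c r) (H wb)) \<longlongrightarrow> contour_integral (circlepath c r) (H (p,c))) (at (p,c))"
    by (rule contour_integral_uniform_limit_circlepath(2)[OF integ ulim _ r]) simp
  have "isCont Q (p,c)"
    unfolding isCont_def Q_def by (intro tendsto_divide lim tendsto_const) simp
  moreover have "eventually (\<lambda>wb. G (upd (fst wb) i (snd wb)) - G (upd (fst wb) i c) = (snd wb - c) * Q wb) (nhds (p, c))"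
  proof -
    have "eventually (\<lambda>wb. dist wb (p,c) < \<rho>) (nhds (p,c))"
      using \<rho> by (auto simp: eventually_nhds_metric)
    then show ?thesis
    proof (rule eventually_mono)
      fix wb :: "(complex^'n) \<times> complex" assume wb: "dist wb (p,c) < \<rho>"
      have "dist (fst wb) p \<le> dist wb (p,c)" "dist (snd wb) c \<le> dist wb (p,c)"
        by (metis dist_fst_le fst_conv, metis dist_snd_le snd_conv)
      then have "norm (fst wb - p) < e/4" "norm (snd wb - c) < r"
        using wb e by (auto simp: \<rho>_def r_def dist_norm)
      then show "G (upd (fst wb) i (snd wb)) - G (upd (fst wb) i c) = (snd wb - c) * Q wb"
        using ident by (metis prod.collapse)
    qed
  qed
  ultimately show ?thesis using Qp unfolding c_def by blast
qed


lemma eventually_neq_at: "eventually (\<lambda>z. z \<noteq> z0) (at (z0::complex))"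
  unfolding eventually_at by (intro exI[of _ 1]) auto

lemma chain_rule_curve:
  fixes G :: "complex^'n \<Rightarrow> complex" and \<gamma> :: "complex \<Rightarrow> complex^'n"
  assumes U: "open U" and cG: "continuous_on U G"
    and dG: "\<And>q j. q \<in> U \<Longrightarrow> (\<lambda>z. G (upd q j z)) field_differentiable at (q$j)"
    and d\<gamma>: "\<And>j. ((\<lambda>z. \<gamma> z $ j) has_field_derivative \<gamma>' j) (at z0)"
    and pU: "\<gamma> z0 \<in> U"
  shows "((\<lambda>z. G (\<gamma> z)) has_field_derivative (\<Sum>j\<in>UNIV. pd_sc G j (\<gamma> z0) * \<gamma>' j)) (at z0)"
proof -
  define p where "p = \<gamma> z0"
  define w where "w = (\<lambda>I z. (\<chi> j. if j \<in> I then \<gamma> z $ j else p $ j) :: complex^'n)"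
  have cont\<gamma>: "isCont (\<lambda>z. \<gamma> z $ j) z0" for j using d\<gamma>[of j] by (rule DERIV_isCont)
  have contw: "isCont (w I) z0" for I
  proof -
    have "((\<lambda>z. \<chi> j. if j \<in> I then \<gamma> z $ j else p $ j) \<longlongrightarrow> (\<chi> j. if j \<in> I then \<gamma> z0 $ j else p $ j)) (at z0)"
    proof (rule tendsto_vec_lambda)
      fix j show "((\<lambda>z. if j \<in> I then \<gamma> z $ j else p $ j) \<longlongrightarrow> (if j \<in> I then \<gamma> z0 $ j else p $ j)) (at z0)"
        using cont\<gamma>[of j] by (cases "j \<in> I") (auto simp: isCont_def)
    qed
    then show ?thesis unfolding isCont_def w_def by simp
  qed
  have wz0: "w I z0 = p" for I by (simp add: w_def p_def vec_eq_iff)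
  have claim: "\<exists>\<phi>. isCont \<phi> z0 \<and> \<phi> z0 = (\<Sum>j\<in>I. pd_sc G j p * \<gamma>' j) \<and>
      eventually (\<lambda>z. G (w I z) - G p = (z - z0) * \<phi> z) (at z0)" if "finite I" for I
    using that
  proof (induction I rule: finite_induct)
    case empty
    have "w {} z = p" for z by (simp add: w_def vec_eq_iff)
    then show ?case by (intro exI[of _ "\<lambda>_. 0"]) auto
  next
    case (insert i I)
    obtain \<phi> where \<phi>: "isCont \<phi> z0" "\<phi> z0 = (\<Sum>j\<in>I. pd_sc G j p * \<gamma>' j)"
      "eventually (\<lambda>z. G (w I z) - G p = (z - z0) * \<phi> z) (at z0)" using insert.IH by blast
    obtain Q where Q: "isCont Q (p, p$i)" "Q (p, p$i) = pd_sc G i p"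
      "eventually (\<lambda>wb. G (upd (fst wb) i (snd wb)) - G (upd (fst wb) i (p$i)) = (snd wb - p$i) * Q wb) (nhds (p, p$i))"
      using osgood_K[OF U cG dG pU[folded p_def]] by blast
    define \<psi> where "\<psi> = (\<lambda>z. if z = z0 then \<gamma>' i else (\<gamma> z $ i - p$i) / (z - z0))"
    have "((\<lambda>z. (\<gamma> z $ i - \<gamma> z0 $ i) / (z - z0)) \<longlongrightarrow> \<gamma>' i) (at z0)"
      using d\<gamma>[of i] by (simp add: has_field_derivative_iff)
    then have "(\<psi> \<longlongrightarrow> \<gamma>' i) (at z0)"
      by (rule iffD1[OF tendsto_cong, rotated]) (use eventually_neq_at[of z0] in \<open>eventually_elim, simp add: \<psi>_def p_def\<close>)
    then have c\<psi>: "isCont \<psi> z0" by (simp add: isCont_def \<psi>_def)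
    define g where "g = (\<lambda>z. (w I z, \<gamma> z $ i))"
    have cg: "isCont g z0" unfolding g_def by (intro isCont_Pair contw cont\<gamma>)
    have gz0: "g z0 = (p, p$i)" by (simp add: g_def wz0 p_def)
    have cQg: "isCont (\<lambda>z. Q (g z)) z0" using isCont_o2[OF cg] Q(1) gz0 by simp
    have evQ: "eventually (\<lambda>z. G (upd (fst (g z)) i (snd (g z))) - G (upd (fst (g z)) i (p$i)) = (snd (g z) - p$i) * Q (g z)) (at z0)"
      using eventually_compose_filterlim[OF Q(3)] cg gz0 unfolding isCont_def by (metis (mono_tags, lifting))
    have wi: "w I z $ i = p $ i" for z using insert.hyps by (simp add: w_def)
    have wins: "w (insert i I) z = upd (w I z) i (\<gamma> z $ i)" for z
      by (simp add: w_def vec_eq_iff)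
    have wup: "upd (w I z) i (p$i) = w I z" for z using upd_same[of "w I z" i] wi[of z] by simp
    show ?case
    proof (intro exI conjI)
      show "isCont (\<lambda>z. \<psi> z * Q (g z) + \<phi> z) z0" by (intro isCont_add isCont_mult c\<psi> cQg \<phi>(1))
      show "\<psi> z0 * Q (g z0) + \<phi> z0 = (\<Sum>j\<in>insert i I. pd_sc G j p * \<gamma>' j)"
        using insert.hyps \<phi>(2) Q(2) gz0 by (simp add: \<psi>_def mult.commute)
      show "eventually (\<lambda>z. G (w (insert i I) z) - G p = (z - z0) * (\<psi> z * Q (g z) + \<phi> z)) (at z0)"
        using evQ \<phi>(3) eventually_neq_at[of z0]
      proof eventually_elim
        case (elim z)
        have "G (w (insert i I) z) - G p = (G (upd (w I z) i (\<gamma> z $ i)) - G (upd (w I z) i (p$i))) + (G (w I z) - G p)"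
          by (simp add: wins wup)
        also have "\<dots> = (\<gamma> z $ i - p$i) * Q (g z) + (z - z0) * \<phi> z"
          using elim by (simp add: g_def)
        also have "\<gamma> z $ i - p$i = (z - z0) * \<psi> z" using elim by (simp add: \<psi>_def)
        finally show ?case by (simp add: algebra_simps)
      qed
    qed
  qed
  obtain \<phi> where \<phi>: "isCont \<phi> z0" "\<phi> z0 = (\<Sum>j\<in>UNIV. pd_sc G j p * \<gamma>' j)"
      "eventually (\<lambda>z. G (w UNIV z) - G p = (z - z0) * \<phi> z) (at z0)" using claim[of UNIV] by auto
  have wU: "w UNIV z = \<gamma> z" for z by (simp add: w_def vec_eq_iff)
  have "((\<lambda>z. (G (\<gamma> z) - G (\<gamma> z0)) / (z - z0)) \<longlongrightarrow> \<phi> z0) (at z0)"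
  proof (rule iffD2[OF tendsto_cong])
    show "(\<phi> \<longlongrightarrow> \<phi> z0) (at z0)" using \<phi>(1) by (simp add: isCont_def)
    show "eventually (\<lambda>z. (G (\<gamma> z) - G (\<gamma> z0)) / (z - z0) = \<phi> z) (at z0)"
      using \<phi>(3) eventually_neq_at[of z0] by eventually_elim (simp add: wU p_def)
  qed
  then show ?thesis using \<phi>(2) by (simp add: has_field_derivative_iff p_def)
qed


definition vb :: "int \<Rightarrow> ('n::finite) ser \<Rightarrow> bool" where
  "vb N a \<longleftrightarrow> (\<forall>k<N. a k = 0)"

lemma vb_mono: "vb N a \<Longrightarrow> M \<le> N \<Longrightarrow> vb M a"
  by (auto simp: vb_def)

lemma lbdd_vb: "lbdd a \<longleftrightarrow> (\<exists>N. vb N a)"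
  by (simp add: lbdd_def vb_def)

lemma matrix_add_rdistrib: "((A::'a::comm_semiring_1^'n^'m) + B) ** C = A ** C + B ** C"
  by (vector matrix_matrix_mult_def sum.distrib[symmetric] field_simps)

lemma mm_sum_left: "(\<Sum>x\<in>A. f x) ** (B::'a::comm_semiring_1^'n^'m) = (\<Sum>x\<in>A. f x ** B)"
  by (induction A rule: infinite_finite_induct) (auto simp: matrix_add_rdistrib)

lemma mm_sum_right: "(B::'a::comm_semiring_1^'n^'m) ** (\<Sum>x\<in>A. f x) = (\<Sum>x\<in>A. B ** f x)"
  by (induction A rule: infinite_finite_induct) (auto simp: matrix_add_ldistrib)

lemma smul_sup:
  assumes "finite A" "\<And>j. a j \<noteq> 0 \<Longrightarrow> c (k - j) \<noteq> 0 \<Longrightarrow> j \<in> A"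
  shows "smul a c k = (\<Sum>j\<in>A. a j ** c (k - j))"
  unfolding smul_def
proof (rule sum.mono_neutral_left)
  show "finite A" by fact
  show "{j. a j \<noteq> 0 \<and> c (k - j) \<noteq> 0} \<subseteq> A" using assms(2) by auto
  show "\<forall>i\<in>A - {j. a j \<noteq> 0 \<and> c (k - j) \<noteq> 0}. a i ** c (k - i) = 0" by auto
qed

lemma smul_vb:
  assumes "vb N a" "vb M c"
  shows "smul a c k = (\<Sum>j\<in>{N..k-M}. a j ** c (k - j))"
  by (rule smul_sup) (use assms in \<open>auto simp: vb_def not_less[symmetric]\<close>)

lemma vb_smul: assumes "vb N a" "vb M c" shows "vb (N + M) (smul a c)"
  unfolding vb_def smul_vb[OF assms] by auto


lemma smul_sup_shift:
  assumes "finite A" "\<And>l. c l \<noteq> 0 \<Longrightarrow> d (m - l) \<noteq> 0 \<Longrightarrow> l + s \<in> A"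
  shows "smul c d m = (\<Sum>j\<in>A. c (j - s) ** d (m + s - j))"
proof -
  have "smul c d m = (\<Sum>l\<in>(\<lambda>j. j - s) ` A. c l ** d (m - l))"
    by (rule smul_sup) (use assms in \<open>auto simp: image_iff intro!: bexI[of _ "_ + s"]\<close>)
  also have "\<dots> = (\<Sum>j\<in>A. c (j - s) ** d (m - (j - s)))"
    by (subst sum.reindex) (auto simp: inj_on_def)
  finally show ?thesis by (simp add: algebra_simps)
qed

lemma smul_assoc:
  assumes a: "vb N a" and c: "vb N c" and d: "vb N d"
  shows "smul (smul a c) d = smul a (smul c d)"
proof
  fix k
  define M where "M = \<bar>k\<bar> + 3 * \<bar>N\<bar> + 1"
  define B where "B = {-M..M}"
  have fB: "finite B" by (simp add: B_def)
  have ac: "vb (N+N) (smul a c)" and cd: "vb (N+N) (smul c d)" using vb_smul a c d by blast+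
  have "smul (smul a c) d k = (\<Sum>j\<in>B. smul a c j ** d (k - j))"
  proof (rule smul_sup[OF fB])
    fix j assume "smul a c j \<noteq> 0" "d (k - j) \<noteq> 0"
    then have "j \<ge> N + N" "k - j \<ge> N" using ac d by (auto simp: vb_def not_less[symmetric])
    then show "j \<in> B" by (auto simp: B_def M_def)
  qed
  also have "\<dots> = (\<Sum>j\<in>B. \<Sum>i\<in>B. (a i ** c (j - i)) ** d (k - j))"
  proof (rule sum.cong[OF refl])
    fix j assume "j \<in> B"
    show "smul a c j ** d (k - j) = (\<Sum>i\<in>B. (a i ** c (j - i)) ** d (k - j))"
    proof (cases "d (k - j) = 0")
      case True then show ?thesis by simp
    next
      case False
      then have kj: "k - j \<ge> N" using d by (auto simp: vb_def not_less[symmetric])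
      have "smul a c j = (\<Sum>i\<in>B. a i ** c (j - i))"
      proof (rule smul_sup[OF fB])
        fix i assume "a i \<noteq> 0" "c (j - i) \<noteq> 0"
        then have "i \<ge> N" "j - i \<ge> N" using a c by (auto simp: vb_def not_less[symmetric])
        then show "i \<in> B" using kj by (auto simp: B_def M_def)
      qed
      then show ?thesis by (simp add: mm_sum_left)
    qed
  qed
  also have "\<dots> = (\<Sum>i\<in>B. \<Sum>j\<in>B. a i ** (c (j - i) ** d (k - j)))"
    by (subst sum.swap) (simp add: matrix_mul_assoc)
  also have "\<dots> = (\<Sum>i\<in>B. a i ** smul c d (k - i))"
  proof (rule sum.cong[OF refl])
    fix i assume "i \<in> B"
    show "(\<Sum>j\<in>B. a i ** (c (j - i) ** d (k - j))) = a i ** smul c d (k - i)"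
    proof (cases "a i = 0")
      case True then show ?thesis by simp
    next
      case False
      then have iN: "i \<ge> N" using a by (auto simp: vb_def not_less[symmetric])
      have "smul c d (k - i) = (\<Sum>j\<in>B. c (j - i) ** d (k - i + i - j))"
      proof (rule smul_sup_shift[OF fB])
        fix l assume "c l \<noteq> 0" "d (k - i - l) \<noteq> 0"
        then have "l \<ge> N" "k - i - l \<ge> N" using c d by (auto simp: vb_def not_less[symmetric])
        then show "l + i \<in> B" using iN by (auto simp: B_def M_def)
      qed
      then show ?thesis by (simp add: mm_sum_right)
    qed
  qed
  also have "\<dots> = smul a (smul c d) k"
  proof (rule smul_sup[OF fB, symmetric])
    fix i assume "a i \<noteq> 0" "smul c d (k - i) \<noteq> 0"
    then have "i \<ge> N" "k - i \<ge> N + N" using a cd by (auto simp: vb_def not_less[symmetric])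
    then show "i \<in> B" by (auto simp: B_def M_def)
  qed
  finally show "smul (smul a c) d k = smul a (smul c d) k" .
qed


lemma smul_sone_left: "smul sone a = a"
proof
  fix k show "smul sone a k = a k"
    by (subst smul_sup[of "{0}"]) (auto simp: sone_def split: if_splits)
qed

lemma smul_sone_right: "smul a sone = a"
proof
  fix k show "smul a sone k = a k"
    by (subst smul_sup[of "{k}"]) (auto simp: sone_def split: if_splits)
qed

lemma vb_sone: "vb 0 sone" by (simp add: vb_def sone_def)

lemma smul_zero_right: "smul a (\<lambda>_. 0) = (\<lambda>_. 0)"
  by (simp add: smul_def fun_eq_iff)
lemma smul_zero_left: "smul (\<lambda>_. 0) a = (\<lambda>_. 0)"
  by (simp add: smul_def fun_eq_iff)

lemma vb_add: "vb N c \<Longrightarrow> vb N d \<Longrightarrow> vb N (\<lambda>k. c k + d k)"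
  by (simp add: vb_def)
lemma vb_diff: "vb N c \<Longrightarrow> vb N d \<Longrightarrow> vb N (\<lambda>k. c k - d k)"
  by (simp add: vb_def)

lemma smul_add_right:
  assumes "vb N a" "vb M c" "vb M d"
  shows "smul a (\<lambda>k. c k + d k) k = smul a c k + smul a d k"
  using assms by (simp add: smul_vb[OF assms(1) vb_add[OF assms(2,3)]] smul_vb[of N a M]
      matrix_add_ldistrib sum.distrib)

lemma smul_add_left:
  assumes "vb N c" "vb N d" "vb M a"
  shows "smul (\<lambda>k. c k + d k) a k = smul c a k + smul d a k"
  using assms by (simp add: smul_vb[OF vb_add[OF assms(1,2)] assms(3)] smul_vb[of N _ M]
      matrix_add_rdistrib sum.distrib)

lemma matrix_diff_ldistrib: "(A::'a::comm_ring_1^'n^'m) ** (B - C) = A ** B - A ** C"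
  by (vector matrix_matrix_mult_def sum_subtractf[symmetric] field_simps)
lemma matrix_diff_rdistrib: "((A::'a::comm_ring_1^'n^'m) - B) ** C = A ** C - B ** C"
  by (vector matrix_matrix_mult_def sum_subtractf[symmetric] field_simps)
lemma matrix_neg_left: "(- (A::'a::comm_ring_1^'n^'m)) ** C = - (A ** C)"
  by (vector matrix_matrix_mult_def sum_negf[symmetric] field_simps)
lemma matrix_neg_right: "(A::'a::comm_ring_1^'n^'m) ** (- C) = - (A ** C)"
  by (vector matrix_matrix_mult_def sum_negf[symmetric] field_simps)

lemma smul_diff_right:
  assumes "vb N a" "vb M c" "vb M d"
  shows "smul a (\<lambda>k. c k - d k) k = smul a c k - smul a d k"
  using assms by (simp add: smul_vb[OF assms(1) vb_diff[OF assms(2,3)]] smul_vb[of N a M]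
      matrix_diff_ldistrib sum_subtractf)

lemma smul_diff_left:
  assumes "vb N c" "vb N d" "vb M a"
  shows "smul (\<lambda>k. c k - d k) a k = smul c a k - smul d a k"
  using assms by (simp add: smul_vb[OF vb_diff[OF assms(1,2)] assms(3)] smul_vb[of N _ M]
      matrix_diff_rdistrib sum_subtractf)

lemma smul_comm:
  assumes "\<And>i j. a i ** c j = c j ** a i"
  shows "smul a c = smul c a"
proof
  fix k
  show "smul a c k = smul c a k"
    unfolding smul_def
    by (rule sum.reindex_bij_witness[where i="\<lambda>j. k - j" and j="\<lambda>j. k - j"]) (auto simp: assms)
qed

function rinvI :: "'n::finite ser \<Rightarrow> int \<Rightarrow> 'n cmat" where
  "rinvI a k = (if k < 0 then 0 else if k = 0 then mat 1 else - (\<Sum>j\<in>{1..k}. a j ** rinvI a (k - j)))"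
  by auto
termination by (relation "Wellfounded.measure (\<lambda>(a,k). nat k)") auto

function linvI :: "'n::finite ser \<Rightarrow> int \<Rightarrow> 'n cmat" where
  "linvI a k = (if k < 0 then 0 else if k = 0 then mat 1 else - (\<Sum>j\<in>{1..k}. linvI a (k - j) ** a j))"
  by auto
termination by (relation "Wellfounded.measure (\<lambda>(a,k). nat k)") auto

declare rinvI.simps[simp del] linvI.simps[simp del]

lemma vb_rinvI: "vb 0 (rinvI a)" by (simp add: vb_def rinvI.simps)
lemma vb_linvI: "vb 0 (linvI a)" by (simp add: vb_def linvI.simps)

lemma rinvI_right:
  assumes a: "vb 0 a" "a 0 = mat 1"
  shows "smul a (rinvI a) = sone"
proof
  fix k
  show "smul a (rinvI a) k = sone k"
  proof (cases "k < 0")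
    case True then show ?thesis using vb_smul[OF a(1) vb_rinvI, of a] by (simp add: vb_def sone_def)
  next
    case False
    then have "{0..k} = insert 0 {1..k}" by auto
    then have "smul a (rinvI a) k = a 0 ** rinvI a k + (\<Sum>j\<in>{1..k}. a j ** rinvI a (k - j))"
      by (simp add: smul_vb[OF a(1) vb_rinvI])
    also have "\<dots> = sone k" using False a(2)
      by (cases "k = 0") (simp_all add: rinvI.simps[of a k] rinvI.simps[of a 0] sone_def)
    finally show ?thesis .
  qed
qed

lemma linvI_left:
  assumes a: "vb 0 a" "a 0 = mat 1"
  shows "smul (linvI a) a = sone"
proof
  fix k
  show "smul (linvI a) a k = sone k"
  proof (cases "k < 0")
    case True then show ?thesis using vb_smul[OF vb_linvI a(1), of a] by (simp add: vb_def sone_def)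
  next
    case False
    have "smul (linvI a) a k = (\<Sum>j\<in>{0..k}. linvI a j ** a (k - j))"
      by (simp add: smul_vb[OF vb_linvI a(1)])
    also have "\<dots> = (\<Sum>j\<in>{0..k}. linvI a (k - j) ** a j)"
      by (rule sum.reindex_bij_witness[where i="\<lambda>j. k - j" and j="\<lambda>j. k - j"]) auto
    also have "{0..k} = insert 0 {1..k}" using False by auto
    then have "(\<Sum>j\<in>{0..k}. linvI a (k - j) ** a j) = linvI a k ** a 0 + (\<Sum>j\<in>{1..k}. linvI a (k - j) ** a j)"
      by simp
    also have "\<dots> = sone k" using False a(2)
      by (cases "k = 0") (simp_all add: linvI.simps[of a k] linvI.simps[of a 0] sone_def)
    finally show ?thesis .
  qed
qed

lemma sinv_unique:
  assumes "lbdd a" "lbdd c" "smul a c = sone" "smul c a = sone"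
  shows "sinv a = c"
proof -
  have ex: "\<exists>c. lbdd c \<and> smul a c = sone \<and> smul c a = sone" using assms by blast
  define c' where "c' = sinv a"
  have c': "lbdd c'" "smul a c' = sone" "smul c' a = sone"
    using someI_ex[OF ex] unfolding c'_def sinv_def by auto
  obtain N1 N2 N3 where n: "vb N1 a" "vb N2 c" "vb N3 c'" using assms c' by (auto simp: lbdd_vb)
  define N where "N = min N1 (min N2 N3)"
  have v: "vb N a" "vb N c" "vb N c'" using n by (auto simp: N_def intro: vb_mono)
  have "c' = smul c' (smul a c)" by (simp add: assms smul_sone_right)
  also have "\<dots> = smul (smul c' a) c" by (rule smul_assoc[symmetric]) (use v in auto)
  also have "\<dots> = c" by (simp add: c' smul_sone_left)
  finally show ?thesis by (simp add: c'_def)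
qed

lemma sinv_vb0:
  assumes a: "vb 0 a" "a 0 = mat 1"
  shows "sinv a = rinvI a" "smul a (sinv a) = sone" "smul (sinv a) a = sone" "vb 0 (sinv a)"
proof -
  have "linvI a = smul (linvI a) (smul a (rinvI a))" by (simp add: rinvI_right[OF a] smul_sone_right)
  also have "\<dots> = smul (smul (linvI a) a) (rinvI a)"
    by (rule smul_assoc[symmetric]) (use a vb_linvI vb_rinvI in auto)
  also have "\<dots> = rinvI a" by (simp add: linvI_left[OF a] smul_sone_left)
  finally have lr: "linvI a = rinvI a" .
  show si: "sinv a = rinvI a"
    by (rule sinv_unique) (use a vb_rinvI rinvI_right[OF a] linvI_left[OF a] lr in \<open>auto simp: lbdd_vb\<close>)
  show "smul a (sinv a) = sone" "smul (sinv a) a = sone" "vb 0 (sinv a)"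
    using si rinvI_right[OF a] linvI_left[OF a] lr vb_rinvI by auto
qed


lemma sc_nth [simp]: "sc c M $ a $ b = c * M $ a $ b" by (simp add: sc_def)

lemma holo_n_open: "holo_n f S \<Longrightarrow> open S" by (simp add: holo_n_def)

lemma holo_n_const: "open S \<Longrightarrow> holo_n (\<lambda>_. c) S"
  by (simp add: holo_n_def)

lemma holo_n_add: "holo_n f S \<Longrightarrow> holo_n g S \<Longrightarrow> holo_n (\<lambda>p. f p + g p) S"
  unfolding holo_n_def by (auto intro!: continuous_on_add field_differentiable_add)

lemma holo_n_diff: "holo_n f S \<Longrightarrow> holo_n g S \<Longrightarrow> holo_n (\<lambda>p. f p - g p) S"
  unfolding holo_n_def by (auto intro!: continuous_on_diff field_differentiable_diff)

lemma holo_n_minus: "holo_n f S \<Longrightarrow> holo_n (\<lambda>p. - f p) S"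
  unfolding holo_n_def by (auto intro!: continuous_on_minus field_differentiable_minus)

lemma holo_n_mult: "holo_n f S \<Longrightarrow> holo_n g S \<Longrightarrow> holo_n (\<lambda>p. f p * g p) S"
  unfolding holo_n_def by (auto intro!: continuous_on_mult field_differentiable_mult)

lemma holo_n_sum: "open S \<Longrightarrow> (\<And>x. x \<in> A \<Longrightarrow> holo_n (f x) S) \<Longrightarrow> holo_n (\<lambda>p. \<Sum>x\<in>A. f x p) S"
proof (induction A rule: infinite_finite_induct)
  case (infinite A) then show ?case by (simp add: holo_n_const)
next
  case empty then show ?case by (simp add: holo_n_const)
next
  case (insert x F) then show ?case by (simp add: holo_n_add)
qed

lemma line_open: "open S \<Longrightarrow> open {z. upd p i z \<in> S}"
proof -
  assume "open S"
  have "continuous_on UNIV (\<lambda>z. upd p i z)" by (intro continuous_on_upd continuous_intros)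
  then show ?thesis using \<open>open S\<close> open_vimage[of S "\<lambda>z. upd p i z"] by (simp add: vimage_def)
qed

lemma holo_n_cong: assumes "holo_n f S" "\<And>p. p \<in> S \<Longrightarrow> f p = g p" shows "holo_n g S"
  unfolding holo_n_def
proof (intro conjI ballI allI)
  show "open S" using assms holo_n_open by blast
  have "continuous_on S f" using assms(1) by (simp add: holo_n_def)
  then show "continuous_on S g" using assms(2) by (simp cong: continuous_on_cong)
  fix p i assume p: "p \<in> S"
  have "(\<lambda>z. f (upd p i z)) field_differentiable at (p$i)" using assms(1) p by (simp add: holo_n_def)
  then obtain D where "((\<lambda>z. f (upd p i z)) has_field_derivative D) (at (p$i))"
    by (auto simp: field_differentiable_def)
  then have "((\<lambda>z. g (upd p i z)) has_field_derivative D) (at (p$i))"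
    by (rule has_field_derivative_transform_within_open[where S="{z. upd p i z \<in> S}"])
      (use line_open[OF \<open>open S\<close>] p assms(2) in auto)
  then show "(\<lambda>z. g (upd p i z)) field_differentiable at (p$i)" by (auto simp: field_differentiable_def)
qed

lemma holo_mat_open: "holo_mat f S \<Longrightarrow> open S" by (auto simp: holo_mat_def holo_n_def)

lemma holo_mat_const: "open S \<Longrightarrow> holo_mat (\<lambda>_. c) S"
  by (simp add: holo_mat_def holo_n_const)

lemma holo_mat_add: "holo_mat f S \<Longrightarrow> holo_mat g S \<Longrightarrow> holo_mat (\<lambda>p. f p + g p) S"
  by (simp add: holo_mat_def holo_n_add)

lemma holo_mat_diff: "holo_mat f S \<Longrightarrow> holo_mat g S \<Longrightarrow> holo_mat (\<lambda>p. f p - g p) S"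
  by (simp add: holo_mat_def holo_n_diff)

lemma holo_mat_minus: "holo_mat f S \<Longrightarrow> holo_mat (\<lambda>p. - f p) S"
  by (simp add: holo_mat_def holo_n_minus)

lemma holo_mat_sum: "open S \<Longrightarrow> (\<And>x. x \<in> A \<Longrightarrow> holo_mat (f x) S) \<Longrightarrow> holo_mat (\<lambda>p. \<Sum>x\<in>A. f x p) S"
  unfolding holo_mat_def by (auto intro!: holo_n_sum)

lemma holo_mat_mm: assumes "holo_mat f S" "holo_mat g S" shows "holo_mat (\<lambda>p. f p ** g p) S"
proof -
  have "open S" using holo_mat_open[OF assms(1)] .
  then show ?thesis using assms unfolding holo_mat_def matrix_matrix_mult_def
    by (auto intro!: holo_n_sum holo_n_mult)
qed

lemma holo_mat_cong: "holo_mat f S \<Longrightarrow> (\<And>p. p \<in> S \<Longrightarrow> f p = g p) \<Longrightarrow> holo_mat g S"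
  unfolding holo_mat_def proof (intro allI)
  fix a b assume "\<forall>a b. holo_n (\<lambda>p. f p $ a $ b) S" "\<And>p. p \<in> S \<Longrightarrow> f p = g p"
  then show "holo_n (\<lambda>p. g p $ a $ b) S" using holo_n_cong[of "\<lambda>p. f p $ a $ b" S "\<lambda>p. g p $ a $ b"] by simp
qed

definition hpd :: "(complex^'n \<Rightarrow> ('n::finite) cmat) \<Rightarrow> 'n \<Rightarrow> complex^'n \<Rightarrow> 'n cmat \<Rightarrow> bool" where
  "hpd f i x M \<longleftrightarrow> (\<forall>a c. ((\<lambda>z. f (upd x i z) $ a $ c) has_field_derivative M $ a $ c) (at (x$i)))"

lemma hpd_pd: "hpd f i x M \<Longrightarrow> pd f i x = M"
  by (simp add: hpd_def pd_def pd_sc_def vec_eq_iff DERIV_imp_deriv)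

lemma hpd_const: "hpd (\<lambda>_. c) i x 0"
  by (simp add: hpd_def)

lemma hpd_add: "hpd f i x M \<Longrightarrow> hpd g i x N \<Longrightarrow> hpd (\<lambda>y. f y + g y) i x (M + N)"
  unfolding hpd_def by (auto intro!: DERIV_add)

lemma hpd_diff: "hpd f i x M \<Longrightarrow> hpd g i x N \<Longrightarrow> hpd (\<lambda>y. f y - g y) i x (M - N)"
  unfolding hpd_def by (auto intro!: DERIV_diff)

lemma hpd_minus: "hpd f i x M \<Longrightarrow> hpd (\<lambda>y. - f y) i x (- M)"
  unfolding hpd_def by (auto intro!: DERIV_minus)

lemma hpd_sum: "(\<And>k. k \<in> A \<Longrightarrow> hpd (f k) i x (M k)) \<Longrightarrow> hpd (\<lambda>y. \<Sum>k\<in>A. f k y) i x (\<Sum>k\<in>A. M k)"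
proof (induction A rule: infinite_finite_induct)
  case (infinite A) then show ?case by (simp add: hpd_const)
next
  case empty then show ?case by (simp add: hpd_const)
next
  case (insert k F) then show ?case by (simp add: hpd_add)
qed

lemma hpd_mm: assumes "hpd f i x M" "hpd g i x N"
  shows "hpd (\<lambda>y. f y ** g y) i x (M ** g x + f x ** N)"
  unfolding hpd_def
proof (intro allI)
  fix a c
  have df: "((\<lambda>z. f (upd x i z) $ a $ k) has_field_derivative M $ a $ k) (at (x$i))"
    and dg: "((\<lambda>z. g (upd x i z) $ k $ c) has_field_derivative N $ k $ c) (at (x$i))" for k
    using assms by (auto simp: hpd_def)
  have "((\<lambda>z. \<Sum>k\<in>UNIV. f (upd x i z) $ a $ k * g (upd x i z) $ k $ c) has_field_derivative
      (\<Sum>k\<in>UNIV. f (upd x i (x$i)) $ a $ k * N $ k $ c + M $ a $ k * g (upd x i (x$i)) $ k $ c)) (at (x$i))"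
    by (intro DERIV_sum DERIV_mult' df dg)
  then show "((\<lambda>z. (f (upd x i z) ** g (upd x i z)) $ a $ c) has_field_derivative (M ** g x + f x ** N) $ a $ c) (at (x$i))"
    by (simp add: matrix_matrix_mult_def sum.distrib algebra_simps)
qed

lemma hpd_sc: "hpd f i x M \<Longrightarrow> hpd (\<lambda>y. sc c (f y)) i x (sc c M)"
  unfolding hpd_def by (auto intro!: DERIV_cmult)

lemma hpd_cong: assumes "open X" "x \<in> X" "\<And>y. y \<in> X \<Longrightarrow> f y = g y" "hpd f i x M"
  shows "hpd g i x M"
  unfolding hpd_def
proof (intro allI)
  fix a c
  show "((\<lambda>z. g (upd x i z) $ a $ c) has_field_derivative M $ a $ c) (at (x$i))"
    by (rule has_field_derivative_transform_within_open[where S="{z. upd x i z \<in> X}"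
          and f="\<lambda>z. f (upd x i z) $ a $ c"])
      (use assms line_open[OF assms(1)] in \<open>auto simp: hpd_def\<close>)
qed

lemma pd_sc_cong: assumes "open X" "x \<in> X" "\<And>y. y \<in> X \<Longrightarrow> f y = g y"
  shows "pd_sc f i x = pd_sc g i x"
proof -
  have "((\<lambda>z. f (upd x i z)) has_field_derivative D) (at (x$i)) \<longleftrightarrow>
        ((\<lambda>z. g (upd x i z)) has_field_derivative D) (at (x$i))" for D
  proof
    assume "((\<lambda>z. f (upd x i z)) has_field_derivative D) (at (x$i))"
    then show "((\<lambda>z. g (upd x i z)) has_field_derivative D) (at (x$i))"
      by (rule has_field_derivative_transform_within_open[where S="{z. upd x i z \<in> X}"])
        (use line_open[OF assms(1)] assms in auto)
  next
    assume "((\<lambda>z. g (upd x i z)) has_field_derivative D) (at (x$i))"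
    then show "((\<lambda>z. f (upd x i z)) has_field_derivative D) (at (x$i))"
      by (rule has_field_derivative_transform_within_open[where S="{z. upd x i z \<in> X}"])
        (use line_open[OF assms(1)] assms in auto)
  qed
  then show ?thesis unfolding pd_sc_def deriv_def by simp
qed

lemma pd_cong: assumes "open X" "x \<in> X" "\<And>y. y \<in> X \<Longrightarrow> f y = g y"
  shows "pd f i x = pd g i x"
proof -
  have "pd_sc (\<lambda>p'. f p' $ a $ b) i x = pd_sc (\<lambda>p'. g p' $ a $ b) i x" for a b
    by (rule pd_sc_cong[OF assms(1,2)]) (simp add: assms(3))
  then show ?thesis unfolding pd_def by simp
qed

lemma holo_mat_hpd: assumes "holo_mat f S" "p \<in> S" shows "hpd f i p (pd f i p)"
  unfolding hpd_def pd_def pd_sc_def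
proof (intro allI)
  fix a c
  have "(\<lambda>z. f (upd p i z) $ a $ c) field_differentiable at (p$i)"
    using assms by (auto simp: holo_mat_def holo_n_def)
  then show "((\<lambda>z. f (upd p i z) $ a $ c) has_field_derivative
     (\<chi> a b. deriv (\<lambda>z. f (upd p i z) $ a $ b) (p $ i)) $ a $ c) (at (p $ i))"
    by (simp add: DERIV_deriv_iff_field_differentiable)
qed

lemma chain_hpd:
  assumes G: "holo_mat G U" and u: "\<forall>j. holo_n (\<lambda>y. u y $ j) X" and x: "x \<in> X" and ux: "u x \<in> U"
  shows "hpd (\<lambda>y. G (u y)) \<alpha> x (\<Sum>j\<in>UNIV. sc (jac u j \<alpha> x) (pd G j (u x)))"
  unfolding hpd_def
proof (intro allI)
  fix a c
  have hG: "holo_n (\<lambda>p. G p $ a $ c) U" using G by (simp add: holo_mat_def)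
  have d\<gamma>: "((\<lambda>z. u (upd x \<alpha> z) $ j) has_field_derivative jac u j \<alpha> x) (at (x$\<alpha>))" for j
  proof -
    have "(\<lambda>z. u (upd x \<alpha> z) $ j) field_differentiable at (x$\<alpha>)"
      using u x by (auto simp: holo_n_def)
    then show ?thesis by (simp add: jac_def pd_sc_def DERIV_deriv_iff_field_differentiable)
  qed
  have "((\<lambda>z. G (u (upd x \<alpha> z)) $ a $ c) has_field_derivative
      (\<Sum>j\<in>UNIV. pd_sc (\<lambda>p. G p $ a $ c) j (u (upd x \<alpha> (x$\<alpha>))) * jac u j \<alpha> x)) (at (x$\<alpha>))"
    by (rule chain_rule_curve[where U=U and G="\<lambda>p. G p $ a $ c" and \<gamma>="\<lambda>z. u (upd x \<alpha> z)"])
      (use hG d\<gamma> ux in \<open>auto simp: holo_n_def\<close>)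
  then show "((\<lambda>z. G (u (upd x \<alpha> z)) $ a $ c) has_field_derivative
      (\<Sum>j\<in>UNIV. sc (jac u j \<alpha> x) (pd G j (u x))) $ a $ c) (at (x$\<alpha>))"
    by (simp add: pd_def mult.commute)
qed


lemma is_diag_mm_comm: "is_diag A \<Longrightarrow> is_diag B \<Longrightarrow> A ** B = B ** A"
  unfolding is_diag_def matrix_matrix_mult_def
  by (auto simp: vec_eq_iff if_distrib sum.delta' cong: if_cong intro!: sum.cong)
    (metis (no_types, lifting) mult.commute mult_eq_0_iff)

lemma is_diag_mm: "is_diag A \<Longrightarrow> is_diag B \<Longrightarrow> is_diag (A ** B)"
  unfolding is_diag_def matrix_matrix_mult_def
  by (auto intro!: sum.neutral) (metis mult_eq_0_iff)

lemma is_diag_add: "is_diag A \<Longrightarrow> is_diag B \<Longrightarrow> is_diag (A + B)"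
  by (simp add: is_diag_def)
lemma is_diag_diff: "is_diag A \<Longrightarrow> is_diag B \<Longrightarrow> is_diag (A - B)"
  by (simp add: is_diag_def)
lemma is_diag_neg: "is_diag A \<Longrightarrow> is_diag (- A)"
  by (simp add: is_diag_def)
lemma is_diag_0: "is_diag 0" by (simp add: is_diag_def)
lemma is_diag_1: "is_diag (mat 1)" by (simp add: is_diag_def mat_def)
lemma is_diag_sc: "is_diag A \<Longrightarrow> is_diag (sc c A)" by (simp add: is_diag_def)
lemma is_diag_sum: "(\<And>x. x \<in> S \<Longrightarrow> is_diag (f x)) \<Longrightarrow> is_diag (\<Sum>x\<in>S. f x)"
  by (induction S rule: infinite_finite_induct) (auto simp: is_diag_0 is_diag_add)

lemma smul_pot_left: "smul (pot Q E) B k = Q ** B k - E ** B (k + 1)"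
proof -
  have "smul (pot Q E) B k = (\<Sum>j\<in>{0,-1}. pot Q E j ** B (k - j))"
    by (rule smul_sup) (auto simp: pot_def split: if_splits)
  then show ?thesis by (simp add: pot_def matrix_neg_left)
qed

lemma smul_pot_right: "smul B (pot Q E) k = B k ** Q - B (k + 1) ** E"
proof -
  have "smul B (pot Q E) k = (\<Sum>j\<in>{k, k+1}. B j ** pot Q E (k - j))"
    by (rule smul_sup) (auto simp: pot_def split: if_splits)
  then show ?thesis by (simp add: pot_def matrix_neg_right)
qed

lemma vb_pot: "vb (-1) (pot Q E)" by (simp add: vb_def pot_def)

definition ea :: "('n::finite) cmat \<Rightarrow> 'n ser" where
  "ea E = (\<lambda>l. if l = -1 then - E else 0)"

lemma vb_ea: "vb (-1) (ea E)" by (simp add: vb_def ea_def)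

lemma smul_ea_right: "smul B (ea E) k = - (B (k + 1) ** E)"
proof -
  have "smul B (ea E) k = (\<Sum>j\<in>{k+1}. B j ** ea E (k - j))"
    by (rule smul_sup) (auto simp: ea_def split: if_splits)
  then show ?thesis by (simp add: ea_def matrix_neg_right)
qed

lemma smul_ea_left: "smul (ea E) B k = - (E ** B (k + 1))"
proof -
  have "smul (ea E) B k = (\<Sum>j\<in>{-1}. ea E j ** B (k - j))"
    by (rule smul_sup) (auto simp: ea_def split: if_splits)
  then show ?thesis by (simp add: ea_def matrix_neg_left)
qed

lemma phi_diag_eq:
  assumes S: "vb 0 S" "S 0 = mat 1" and D: "vb 0 D" "D 0 = mat 1" "\<And>k. is_diag (D k)"
    and b: "diag_poly_inv b"
  shows "smul (smul (smul S D) b) (sinv (smul S D)) = smul (smul S b) (sinv S)"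
proof -
  obtain Nb where Nb: "vb Nb b" using b by (auto simp: diag_poly_inv_def lbdd_vb)
  define N where "N = min Nb 0"
  have N: "N \<le> 0" "vb N b" using Nb by (auto simp: N_def intro: vb_mono)
  note iS = sinv_vb0[OF S] and iD = sinv_vb0[OF D(1,2)]
  define Si where "Si = sinv S"
  define Di where "Di = sinv D"
  have v: "vb N S" "vb N D" "vb N Si" "vb N Di" "vb N b"
    using S D iS iD N by (auto simp: Si_def Di_def intro: vb_mono)
  have vDS: "vb N (smul Di Si)" "vb N (smul S D)"
    using vb_smul[OF iD(4) iS(4)] vb_smul[OF S(1) D(1)] N by (auto simp: Di_def Si_def intro: vb_mono)
  have inv: "sinv (smul S D) = smul Di Si"
  proof (rule sinv_unique)
    show "lbdd (smul S D)" "lbdd (smul Di Si)" using vDS by (auto simp: lbdd_vb)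
    have "smul (smul S D) (smul Di Si) = smul S (smul D (smul Di Si))"
      by (rule smul_assoc) (use v vDS in auto)
    also have "smul D (smul Di Si) = smul (smul D Di) Si"
      by (rule smul_assoc[symmetric]) (use v in auto)
    also have "\<dots> = Si" using iD by (simp add: Di_def smul_sone_left)
    finally show "smul (smul S D) (smul Di Si) = sone" using iS by (simp add: Si_def)
    have "smul (smul Di Si) (smul S D) = smul Di (smul Si (smul S D))"
      by (rule smul_assoc) (use v vDS in auto)
    also have "smul Si (smul S D) = smul (smul Si S) D"
      by (rule smul_assoc[symmetric]) (use v in auto)
    also have "\<dots> = D" using iS by (simp add: Si_def smul_sone_left)
    finally show "smul (smul Di Si) (smul S D) = sone" using iD by (simp add: Di_def)
  qed
  have comm: "smul D b = smul b D"
    by (rule smul_comm) (use D(3) b in \<open>auto simp: diag_poly_inv_def intro: is_diag_mm_comm\<close>)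
  have vN: "vb N (smul D b)" "vb N (smul S b)" "vb N (smul D (smul Di Si))"
    using vb_smul[OF D(1) N(2)] vb_smul[OF S(1) N(2)] vb_smul[OF D(1) vb_smul[OF iD(4) iS(4)]] N
    by (auto simp: Di_def Si_def intro: vb_mono)
  have "smul (smul (smul S D) b) (smul Di Si) = smul (smul S (smul D b)) (smul Di Si)"
    by (subst smul_assoc) (use v in auto)
  also have "\<dots> = smul (smul S (smul b D)) (smul Di Si)" by (simp add: comm)
  also have "\<dots> = smul (smul (smul S b) D) (smul Di Si)"
    by (subst smul_assoc[of N S b D]) (use v in auto)
  also have "\<dots> = smul (smul S b) (smul D (smul Di Si))"
    by (rule smul_assoc) (use v vN vDS in auto)
  also have "smul D (smul Di Si) = Si"
  proof -
    have "smul D (smul Di Si) = smul (smul D Di) Si" by (rule smul_assoc[symmetric]) (use v in auto)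
    then show ?thesis using iD by (simp add: Di_def smul_sone_left)
  qed
  finally show ?thesis by (simp add: inv Si_def)
qed


lemma Y_zero:
  assumes v0: "vb 0 Sy" "vb 0 Si" "vb 0 Dy" "vb 0 dSy" "vb 0 dDy"
    and v1: "vb (-1) Py" "vb (-1) L1" "vb (-1) L2"
    and inv: "smul Si Sy = sone"
    and TSD: "Ty = smul Sy Dy"
    and eqS: "smul Sy L1 = (\<lambda>k. dSy k + smul Py Sy k)"
    and eqT: "smul Ty L2 = (\<lambda>k. pdT k + smul Py Ty k)"
    and prod: "pdT = (\<lambda>m. smul dSy Dy m + smul Sy dDy m)"
  shows "(\<lambda>m. dDy m + smul L1 Dy m - smul Dy L2 m) = (\<lambda>_. 0)"
proof -
  have w: "vb (-1) Sy" "vb (-1) Si" "vb (-1) Dy" "vb (-1) dSy" "vb (-1) dDy"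
    using v0 by (auto intro: vb_mono)
  have vL1D: "vb (-1) (smul L1 Dy)" using vb_smul[OF v1(2) v0(3)] by simp
  have vDL2: "vb (-1) (smul Dy L2)" using vb_smul[OF v0(3) v1(3)] by simp
  have vT: "vb 0 Ty" using vb_smul[OF v0(1) v0(3)] TSD by simp
  have vPS: "vb (-1) (smul Py Sy)" using vb_smul[OF v1(1) v0(1)] by simp
  define Y where "Y = (\<lambda>m. dDy m + smul L1 Dy m - smul Dy L2 m)"
  have vY: "vb (-1) Y" unfolding Y_def
    by (intro vb_diff vb_add w vL1D vDL2)
  have SY: "smul Sy Y = (\<lambda>_. 0)"
  proof
    fix m
    have "smul Sy Y m = smul Sy dDy m + smul Sy (smul L1 Dy) m - smul Sy (smul Dy L2) m"
      unfolding Y_def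
      by (simp add: smul_diff_right[OF w(1) vb_add[OF w(5) vL1D] vDL2]
          smul_add_right[OF w(1) w(5) vL1D])
    also have "smul Sy (smul L1 Dy) = smul (smul Sy L1) Dy"
      by (rule smul_assoc[symmetric]) (use w v1 in auto)
    also have "\<dots> m = smul dSy Dy m + smul (smul Py Sy) Dy m"
      unfolding eqS by (rule smul_add_left[OF w(4) vPS w(3)])
    also have "smul (smul Py Sy) Dy = smul Py Ty"
      unfolding TSD by (rule smul_assoc) (use w v1 in auto)
    also have "smul Sy (smul Dy L2) = smul Ty L2"
      unfolding TSD by (rule smul_assoc[symmetric]) (use w v1 in auto)
    also have "\<dots> m = pdT m + smul Py Ty m" by (simp add: eqT)
    finally show "smul Sy Y m = 0" by (simp add: prod)
  qed
  have "Y = smul sone Y" by (simp add: smul_sone_left)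
  also have "\<dots> = smul (smul Si Sy) Y" by (simp add: inv)
  also have "\<dots> = smul Si (smul Sy Y)" by (rule smul_assoc) (use w vY in auto)
  also have "\<dots> = (\<lambda>_. 0)" by (simp add: SY smul_zero_right)
  finally show ?thesis unfolding Y_def .
qed


lemma hpd_unique: "hpd f i x M \<Longrightarrow> hpd f i x N \<Longrightarrow> M = N"
  using hpd_pd by metis

lemma hpd_zero: assumes "open X" "x \<in> X" "\<And>y. y \<in> X \<Longrightarrow> f y = 0" shows "hpd f i x 0"
  by (rule hpd_cong[OF assms(1,2), of "\<lambda>_. 0"]) (use assms(3) hpd_const in auto)

lemma hpd_diag: fixes f :: "complex^'n \<Rightarrow> ('n::finite) cmat" assumes X: "open X" "x \<in> X" and d: "\<And>y. y \<in> X \<Longrightarrow> is_diag (f y)" and h: "hpd f i x M"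
  shows "is_diag M"
  unfolding is_diag_def
proof (intro allI impI)
  fix c d :: 'n assume cd: "c \<noteq> d"
  have 1: "((\<lambda>z. f (upd x i z) $ c $ d) has_field_derivative M $ c $ d) (at (x$i))"
    using h by (simp add: hpd_def)
  have "((\<lambda>z. 0) has_field_derivative 0) (at (x$i))" by simp
  then have 2: "((\<lambda>z. f (upd x i z) $ c $ d) has_field_derivative 0) (at (x$i))"
    by (rule has_field_derivative_transform_within_open[where S="{z. upd x i z \<in> X}"])
      (use line_open[OF X(1)] X d cd in \<open>auto simp: is_diag_def\<close>)
  show "M $ c $ d = 0" using DERIV_unique[OF 1 2] .
qed

lemma smul_at0: "vb 0 A \<Longrightarrow> vb 0 B \<Longrightarrow> smul A B 0 = A 0 ** B 0"
  by (simp add: smul_vb[of 0 A 0 B])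

lemma diag_mult_left: assumes "\<And>c d. A$c$d = (if c = d then v c else 0)"
  shows "(A ** B)$c$d = v c * B$c$d"
proof -
  have "(\<Sum>k\<in>UNIV. A$c$k * B$k$d) = (\<Sum>k\<in>UNIV. if k = c then v c * B$k$d else 0)"
    by (rule sum.cong) (auto simp: assms)
  then show ?thesis by (simp add: matrix_matrix_mult_def)
qed

lemma diag_mult_right: assumes "\<And>c d. A$c$d = (if c = d then v c else 0)"
  shows "(B ** A)$c$d = B$c$d * v d"
proof -
  have "(\<Sum>k\<in>UNIV. B$c$k * A$k$d) = (\<Sum>k\<in>UNIV. if k = d then B$c$k * v d else 0)"
    by (rule sum.cong) (auto simp: assms)
  then show ?thesis by (simp add: matrix_matrix_mult_def)
qed

lemma rows_differ:
  fixes J :: "complex^'n^'n"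
  assumes "det J \<noteq> 0" "c \<noteq> d"
  shows "\<exists>\<alpha>. J$c$\<alpha> \<noteq> J$d$\<alpha>"
proof (rule ccontr)
  assume "\<not> ?thesis"
  then have "row c J = row d J" by (simp add: row_def vec_eq_iff)
  then have "det J = 0" using det_identical_rows[OF assms(2)] by blast
  then show False using assms by simp
qed


lemma dress_unique:
  fixes S Si T' :: "int \<Rightarrow> complex^'n \<Rightarrow> ('n::finite) cmat"
    and dS dSi :: "'n \<Rightarrow> int \<Rightarrow> complex^'n \<Rightarrow> 'n cmat"
    and P :: "'n \<Rightarrow> complex^'n \<Rightarrow> 'n ser" and a :: "'n \<Rightarrow> complex^'n \<Rightarrow> 'n cmat"
    and hs ht :: "'n \<Rightarrow> int \<Rightarrow> complex^'n \<Rightarrow> 'n cmat" and J :: "complex^'n \<Rightarrow> complex^'n^'n"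
  assumes X: "open X"
    and hS: "\<And>y. y \<in> X \<Longrightarrow> vb 0 (\<lambda>k. S k y) \<and> S 0 y = mat 1"
    and hSi: "\<And>y. y \<in> X \<Longrightarrow> smul (\<lambda>k. S k y) (\<lambda>k. Si k y) = sone \<and> smul (\<lambda>k. Si k y) (\<lambda>k. S k y) = sone \<and> vb 0 (\<lambda>k. Si k y)"
    and hT: "\<And>y. y \<in> X \<Longrightarrow> vb 0 (\<lambda>k. T' k y) \<and> T' 0 y = mat 1"
    and dS: "\<And>y \<alpha> k. y \<in> X \<Longrightarrow> hpd (S k) \<alpha> y (dS \<alpha> k y)"
    and dSi: "\<And>y \<alpha> k. y \<in> X \<Longrightarrow> hpd (Si k) \<alpha> y (dSi \<alpha> k y)"
    and dT: "\<And>y \<alpha> k. y \<in> X \<Longrightarrow> hpd (T' k) \<alpha> y (pd (T' k) \<alpha> y)"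
    and eqS: "\<And>y \<alpha>. y \<in> X \<Longrightarrow> smul (\<lambda>k. S k y) (\<lambda>l. ea (a \<alpha> y) l + hs \<alpha> l y) = (\<lambda>k. dS \<alpha> k y + smul (P \<alpha> y) (\<lambda>k. S k y) k)"
    and eqT: "\<And>y \<alpha>. y \<in> X \<Longrightarrow> smul (\<lambda>k. T' k y) (\<lambda>l. ea (a \<alpha> y) l + ht \<alpha> l y) = (\<lambda>k. pd (T' k) \<alpha> y + smul (P \<alpha> y) (\<lambda>k. T' k y) k)"
    and vP: "\<And>\<alpha> y. vb (-1) (P \<alpha> y)"
    and hs: "\<And>\<alpha> y. vb 0 (\<lambda>l. hs \<alpha> l y)" "\<And>\<alpha> l y. is_diag (hs \<alpha> l y)"
    and ht: "\<And>\<alpha> y. vb 0 (\<lambda>l. ht \<alpha> l y)" "\<And>\<alpha> l y. is_diag (ht \<alpha> l y)"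
    and a: "\<And>\<alpha> y c d. a \<alpha> y $ c $ d = (if c = d then J y $ c $ \<alpha> else 0)"
    and dJ: "\<And>y. y \<in> X \<Longrightarrow> det (J y) \<noteq> 0"
    and y0: "y0 \<in> X"
  shows "\<exists>D. vb 0 D \<and> D 0 = mat 1 \<and> (\<forall>k. is_diag (D k)) \<and> (\<lambda>k. T' k y0) = smul (\<lambda>k. S k y0) D"
proof -
  define D where "D = (\<lambda>y. smul (\<lambda>k. Si k y) (\<lambda>k. T' k y))"
  have vD: "vb 0 (D y)" if "y \<in> X" for y
    using vb_smul[of 0 "\<lambda>k. Si k y" 0 "\<lambda>k. T' k y"] hSi[OF that] hT[OF that] by (simp add: D_def)
  have TSD: "(\<lambda>k. T' k y) = smul (\<lambda>k. S k y) (D y)" if "y \<in> X" for y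
  proof -
    have "smul (\<lambda>k. S k y) (D y) = smul (smul (\<lambda>k. S k y) (\<lambda>k. Si k y)) (\<lambda>k. T' k y)"
      unfolding D_def by (rule smul_assoc[symmetric]) (use hS[OF that] hSi[OF that] hT[OF that] in auto)
    then show ?thesis using hSi[OF that] by (simp add: smul_sone_left)
  qed
  have Si0: "Si 0 y = mat 1" if "y \<in> X" for y
  proof -
    have "smul (\<lambda>k. S k y) (\<lambda>k. Si k y) 0 = mat 1" using hSi[OF that] by (simp add: sone_def)
    then show ?thesis using smul_at0[of "\<lambda>k. S k y" "\<lambda>k. Si k y"] hS[OF that] hSi[OF that] by simp
  qed
  have D0: "D y 0 = mat 1" if "y \<in> X" for y
    using smul_at0[of "\<lambda>k. Si k y" "\<lambda>k. T' k y"] hSi[OF that] hT[OF that] Si0[OF that]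
    by (simp add: D_def)
  define dD where "dD = (\<lambda>\<alpha> k y. \<Sum>j\<in>{0..k}. dSi \<alpha> j y ** T' (k - j) y + Si j y ** pd (T' (k - j)) \<alpha> y)"
  have hD: "hpd (\<lambda>y. D y k) \<alpha> y (dD \<alpha> k y)" if "y \<in> X" for y k \<alpha>
  proof (rule hpd_cong[OF X that])
    show "hpd (\<lambda>y. \<Sum>j\<in>{0..k}. Si j y ** T' (k - j) y) \<alpha> y (dD \<alpha> k y)"
      unfolding dD_def by (intro hpd_sum hpd_mm dSi dT that)
    fix y' assume "y' \<in> X"
    then show "(\<Sum>j\<in>{0..k}. Si j y' ** T' (k - j) y') = D y' k"
      unfolding D_def using smul_vb[OF conjunct2[OF conjunct2[OF hSi[OF \<open>y' \<in> X\<close>]]] conjunct1[OF hT[OF \<open>y' \<in> X\<close>]], of k]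
      by simp
  qed
  have vdS: "vb 0 (\<lambda>k. dS \<alpha> k y)" if "y \<in> X" for y \<alpha>
    unfolding vb_def
  proof (intro allI impI)
    fix k :: int assume "k < 0"
    have "S k y' = 0" if "y' \<in> X" for y' using conjunct1[OF hS[OF that]] \<open>k < 0\<close> by (simp add: vb_def)
    then have "hpd (S k) \<alpha> y 0" by (intro hpd_zero[OF X \<open>y \<in> X\<close>])
    then show "dS \<alpha> k y = 0" using hpd_unique[OF dS[OF that]] by blast
  qed
  have vdD: "vb 0 (\<lambda>k. dD \<alpha> k y)" for y \<alpha> by (simp add: vb_def dD_def)
  have prod: "(\<lambda>k. pd (T' k) \<alpha> y) = (\<lambda>m. smul (\<lambda>k. dS \<alpha> k y) (D y) m + smul (\<lambda>k. S k y) (\<lambda>k. dD \<alpha> k y) m)"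
    if "y \<in> X" for y \<alpha>
  proof
    fix m
    have "hpd (T' m) \<alpha> y (\<Sum>j\<in>{0..m}. dS \<alpha> j y ** D y (m - j) + S j y ** dD \<alpha> (m - j) y)"
    proof (rule hpd_cong[OF X that])
      show "hpd (\<lambda>y. \<Sum>j\<in>{0..m}. S j y ** D y (m - j)) \<alpha> y (\<Sum>j\<in>{0..m}. dS \<alpha> j y ** D y (m - j) + S j y ** dD \<alpha> (m - j) y)"
        by (intro hpd_sum hpd_mm dS hD that)
      fix y' assume y': "y' \<in> X"
      show "(\<Sum>j\<in>{0..m}. S j y' ** D y' (m - j)) = T' m y'"
      proof -
        have "T' m y' = smul (\<lambda>k. S k y') (D y') m" using fun_cong[OF TSD[OF y'], of m] by simp
        also have "\<dots> = (\<Sum>j\<in>{0..m - 0}. S j y' ** D y' (m - j))"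
          by (rule smul_vb[OF conjunct1[OF hS[OF y']] vD[OF y']])
        finally show ?thesis by simp
      qed
    qed
    then have "pd (T' m) \<alpha> y = (\<Sum>j\<in>{0..m}. dS \<alpha> j y ** D y (m - j) + S j y ** dD \<alpha> (m - j) y)"
      using hpd_unique[OF dT[OF that]] by blast
    also have "\<dots> = smul (\<lambda>k. dS \<alpha> k y) (D y) m + smul (\<lambda>k. S k y) (\<lambda>k. dD \<alpha> k y) m"
      by (simp add: smul_vb[OF vdS[OF that] vD[OF that]] smul_vb[OF conjunct1[OF hS[OF that]] vdD] sum.distrib)
    finally show "pd (T' m) \<alpha> y = smul (\<lambda>k. dS \<alpha> k y) (D y) m + smul (\<lambda>k. S k y) (\<lambda>k. dD \<alpha> k y) m" .
  qed
  have vL: "vb (-1) (\<lambda>l. ea (a \<alpha> y) l + h l y)" if "vb 0 (\<lambda>l. h l y)" for \<alpha> y and h :: "int \<Rightarrow> _ \<Rightarrow> 'n cmat"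
    using that by (intro vb_add vb_ea) (auto intro: vb_mono)
  have Y: "(\<lambda>m. dD \<alpha> m y + smul (\<lambda>l. ea (a \<alpha> y) l + hs \<alpha> l y) (D y) m - smul (D y) (\<lambda>l. ea (a \<alpha> y) l + ht \<alpha> l y) m) = (\<lambda>_. 0)"
    if "y \<in> X" for y \<alpha>
  proof -
    note hSy = hS[OF that] and hSiy = hSi[OF that]
    show ?thesis
      by (rule Y_zero[OF conjunct1[OF hSy] conjunct2[OF conjunct2[OF hSiy]] vD[OF that] vdS[OF that, of \<alpha>] vdD[of \<alpha> y]
          vP[of \<alpha> y] vL[where \<alpha>=\<alpha> and y=y and h="hs \<alpha>", OF hs(1)] vL[where \<alpha>=\<alpha> and y=y and h="ht \<alpha>", OF ht(1)]
          conjunct1[OF conjunct2[OF hSiy]] TSD[OF that] eqS[OF that, of \<alpha>] eqT[OF that, of \<alpha>] prod[OF that, of \<alpha>]])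
  qed
  have key: "a \<alpha> y ** D y (m + 1) - D y (m + 1) ** a \<alpha> y = dD \<alpha> m y + smul (\<lambda>l. hs \<alpha> l y) (D y) m - smul (D y) (\<lambda>l. ht \<alpha> l y) m"
    if "y \<in> X" for y \<alpha> m
  proof -
    have "dD \<alpha> m y + smul (\<lambda>l. ea (a \<alpha> y) l + hs \<alpha> l y) (D y) m - smul (D y) (\<lambda>l. ea (a \<alpha> y) l + ht \<alpha> l y) m = 0"
      using fun_cong[OF Y[OF that, of \<alpha>], of m] by simp
    moreover have "smul (\<lambda>l. ea (a \<alpha> y) l + hs \<alpha> l y) (D y) m = - (a \<alpha> y ** D y (m + 1)) + smul (\<lambda>l. hs \<alpha> l y) (D y) m"
      using smul_add_left[where N="-1" and c="ea (a \<alpha> y)" and d="\<lambda>l. hs \<alpha> l y" and M=0 and a="D y" and k=m,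
          OF vb_ea vb_mono[OF hs(1)] vD[OF that]]
      by (simp add: smul_ea_left)
    moreover have "smul (D y) (\<lambda>l. ea (a \<alpha> y) l + ht \<alpha> l y) m = - (D y (m + 1) ** a \<alpha> y) + smul (D y) (\<lambda>l. ht \<alpha> l y) m"
      using smul_add_right[where N=0 and a="D y" and M="-1" and c="ea (a \<alpha> y)" and d="\<lambda>l. ht \<alpha> l y" and k=m,
          OF vD[OF that] vb_ea vb_mono[OF ht(1)]]
      by (simp add: smul_ea_right)
    ultimately have e: "dD \<alpha> m y + (- (a \<alpha> y ** D y (m + 1)) + smul (\<lambda>l. hs \<alpha> l y) (D y) m)
       - (- (D y (m + 1) ** a \<alpha> y) + smul (D y) (\<lambda>l. ht \<alpha> l y) m) = 0" by simp
    have "a \<alpha> y ** D y (m + 1) - D y (m + 1) ** a \<alpha> y - (dD \<alpha> m y + smul (\<lambda>l. hs \<alpha> l y) (D y) m - smul (D y) (\<lambda>l. ht \<alpha> l y) m)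
      = - (dD \<alpha> m y + (- (a \<alpha> y ** D y (m + 1)) + smul (\<lambda>l. hs \<alpha> l y) (D y) m)
       - (- (D y (m + 1) ** a \<alpha> y) + smul (D y) (\<lambda>l. ht \<alpha> l y) m))"
      by (simp add: algebra_simps)
    also have "\<dots> = 0" unfolding e by simp
    finally show ?thesis by (simp only: right_minus_eq)
  qed
  have diagn: "\<forall>y\<in>X. is_diag (D y (int n))" for n
  proof (induction n rule: less_induct)
    case (less n)
    show ?case
    proof (cases n)
      case 0 then show ?thesis using D0 is_diag_1 by auto
    next
      case (Suc m)
      have IH: "\<And>j y. j \<le> int m \<Longrightarrow> 0 \<le> j \<Longrightarrow> y \<in> X \<Longrightarrow> is_diag (D y j)"
      proof -
        fix j y assume j: "j \<le> int m" "0 \<le> j" "y \<in> X"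
        have "nat j < n" using j Suc by linarith
        then have "\<forall>y\<in>X. is_diag (D y (int (nat j)))" by (rule less)
        then show "is_diag (D y j)" using j by simp
      qed
      show ?thesis
      proof
        fix y assume y: "y \<in> X"
        have rhs: "is_diag (dD \<alpha> (int m) y + smul (\<lambda>l. hs \<alpha> l y) (D y) (int m) - smul (D y) (\<lambda>l. ht \<alpha> l y) (int m))" for \<alpha>
        proof (intro is_diag_diff is_diag_add)
          show "is_diag (dD \<alpha> (int m) y)"
            by (rule hpd_diag[OF X y _ hD[OF y]]) (use IH in auto)
          show "is_diag (smul (\<lambda>l. hs \<alpha> l y) (D y) (int m))"
            unfolding smul_vb[OF hs(1) vD[OF y]] by (intro is_diag_sum is_diag_mm hs(2) IH y) auto
          show "is_diag (smul (D y) (\<lambda>l. ht \<alpha> l y) (int m))"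
            unfolding smul_vb[OF vD[OF y] ht(1)] by (intro is_diag_sum is_diag_mm ht(2) IH y) auto
        qed
        show "is_diag (D y (int n))"
          unfolding is_diag_def
        proof (intro allI impI)
          fix c d :: 'n assume cd: "c \<noteq> d"
          have "(J y $ c $ \<alpha> - J y $ d $ \<alpha>) * D y (int n) $ c $ d = 0" for \<alpha>
          proof -
            have "(a \<alpha> y ** D y (int m + 1) - D y (int m + 1) ** a \<alpha> y) $ c $ d = 0"
              using key[OF y, of \<alpha> "int m"] rhs[of \<alpha>] cd by (simp add: is_diag_def)
            moreover have "int n = int m + 1" using Suc by simp
            ultimately show ?thesis
              by (simp add: diag_mult_left[OF a] diag_mult_right[OF a] algebra_simps)
          qed
          moreover obtain \<alpha> where "J y $ c $ \<alpha> \<noteq> J y $ d $ \<alpha>" using rows_differ[OF dJ[OF y] cd] by blast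
          ultimately show "D y (int n) $ c $ d = 0" by force
        qed
      qed
    qed
  qed
  have diag: "is_diag (D y0 k)" for k
  proof (cases "k < 0")
    case True then show ?thesis using vD[OF y0] is_diag_0 by (simp add: vb_def)
  next
    case False then show ?thesis using diagn[of "nat k"] y0 by simp
  qed
  show ?thesis using vD[OF y0] D0[OF y0] diag TSD[OF y0] by blast
qed


lemma sc_sum: "sc c (sum F A) = (\<Sum>x\<in>A. sc c (F x))"
  by (induction A rule: infinite_finite_induct) (auto simp: vec_eq_iff sc_def algebra_simps)

lemma sc_mm_left: "sc c A ** B = sc c (A ** B)"
  by (simp add: vec_eq_iff matrix_matrix_mult_def sum_distrib_left mult.assoc)

lemma sc_mm_right: "A ** sc c B = sc c (A ** B)"
  by (simp add: vec_eq_iff matrix_matrix_mult_def sum_distrib_left mult.left_commute)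

lemma sc_sum_mm_left: "(\<Sum>i\<in>UNIV. sc (c i) (F i)) ** B = (\<Sum>i\<in>UNIV. sc (c i) (F i ** B))"
  by (simp add: mm_sum_left sc_mm_left)

lemma sc_sum_mm_right: "B ** (\<Sum>i\<in>UNIV. sc (c i) (F i)) = (\<Sum>i\<in>UNIV. sc (c i) (B ** F i))"
  by (simp add: mm_sum_right sc_mm_right)

lemma smul_lincomb_right:
  assumes "vb 0 B" "\<And>i. vb 0 (C i)"
  shows "smul B (\<lambda>l. \<Sum>i\<in>UNIV. sc (c i) (C i l)) k = (\<Sum>i\<in>UNIV. sc (c i) (smul B (C i) k))"
proof -
  have v: "vb 0 (\<lambda>l. \<Sum>i\<in>UNIV. sc (c i) (C i l))" using assms(2) by (simp add: vb_def vec_eq_iff)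
  have "smul B (\<lambda>l. \<Sum>i\<in>UNIV. sc (c i) (C i l)) k = (\<Sum>j\<in>{0..k}. \<Sum>i\<in>UNIV. sc (c i) (B j ** C i (k - j)))"
    unfolding smul_vb[OF assms(1) v] by (simp add: sc_sum_mm_right)
  also have "\<dots> = (\<Sum>i\<in>UNIV. \<Sum>j\<in>{0..k}. sc (c i) (B j ** C i (k - j)))" by (rule sum.swap)
  also have "\<dots> = (\<Sum>i\<in>UNIV. sc (c i) (smul B (C i) k))"
    unfolding smul_vb[OF assms(1) assms(2)] by (simp add: sc_sum)
  finally show ?thesis .
qed


lemma sc_add: "sc c (A + B) = sc c A + sc c B" by (simp add: vec_eq_iff sc_def algebra_simps)
lemma sc_diff: "sc c (A - B) = sc c A - sc c B" by (simp add: vec_eq_iff sc_def algebra_simps)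
lemma sc_neg: "sc c (- A) = - sc c A" by (simp add: vec_eq_iff sc_def)

lemma ea_if: "(\<lambda>l. (if l = -1 then - E else 0) + h l) = (\<lambda>l. ea E l + h l)"
  by (simp add: ea_def)

lemma smul_dress_expand:
  assumes vT: "vb 0 Tp" and vh: "vb 0 h"
  shows "smul Tp (\<lambda>l. ea E l + h l) k = - (Tp (k+1) ** E) + smul Tp h k"
proof -
  have h1: "vb (-1) h" using vh by (rule vb_mono) simp
  show ?thesis using smul_add_right[OF vT vb_ea[of E] h1, of k] by (simp add: smul_ea_right)
qed

lemma lincomb_dressing:
  fixes Tp :: "('n::finite) ser" and pdT :: "'n \<Rightarrow> int \<Rightarrow> 'n cmat" and q e :: "'n \<Rightarrow> 'n cmat"
    and h :: "'n \<Rightarrow> int \<Rightarrow> 'n cmat" and c :: "'n \<Rightarrow> complex"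
  assumes vT: "vb 0 Tp" and vh: "\<And>i. vb 0 (h i)"
    and E: "\<And>i k. pdT i k + smul (pot (q i) (e i)) Tp k = smul Tp (\<lambda>l. (if l = -1 then - e i else 0) + h i l) k"
  shows "smul Tp (\<lambda>l. ea (\<Sum>i\<in>UNIV. sc (c i) (e i)) l + (\<Sum>i\<in>UNIV. sc (c i) (h i l)))
     = (\<lambda>k. (\<Sum>i\<in>UNIV. sc (c i) (pdT i k)) + smul (pot (\<Sum>i\<in>UNIV. sc (c i) (q i)) (\<Sum>i\<in>UNIV. sc (c i) (e i))) Tp k)"
proof
  fix k
  have Ei: "pdT i k = (- (Tp (k+1) ** e i) + smul Tp (h i) k) - (q i ** Tp k - e i ** Tp (k+1))" for i
    using E[of i k] unfolding ea_if smul_dress_expand[OF vT vh] smul_pot_left by (simp add: algebra_simps)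
  have vH: "vb 0 (\<lambda>l. \<Sum>i\<in>UNIV. sc (c i) (h i l))" using vh by (simp add: vb_def vec_eq_iff)
  have "smul Tp (\<lambda>l. ea (\<Sum>i\<in>UNIV. sc (c i) (e i)) l + (\<Sum>i\<in>UNIV. sc (c i) (h i l))) k
      = - (Tp (k+1) ** (\<Sum>i\<in>UNIV. sc (c i) (e i))) + (\<Sum>i\<in>UNIV. sc (c i) (smul Tp (h i) k))"
    unfolding smul_dress_expand[OF vT vH] smul_lincomb_right[OF vT vh] ..
  also have "\<dots> = (\<Sum>i\<in>UNIV. sc (c i) (- (Tp (k+1) ** e i) + smul Tp (h i) k))"
    by (simp add: sc_sum_mm_right sc_add sc_neg sc_diff sum.distrib sum_negf sum_subtractf)
  also have "\<dots> = (\<Sum>i\<in>UNIV. sc (c i) (pdT i k + (q i ** Tp k - e i ** Tp (k+1))))"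
    by (simp add: Ei)
  also have "\<dots> = (\<Sum>i\<in>UNIV. sc (c i) (pdT i k)) + ((\<Sum>i\<in>UNIV. sc (c i) (q i)) ** Tp k - (\<Sum>i\<in>UNIV. sc (c i) (e i)) ** Tp (k+1))"
    by (simp add: sc_sum_mm_left sc_add sc_diff sum.distrib sum_subtractf)
  also have "\<dots> = (\<Sum>i\<in>UNIV. sc (c i) (pdT i k)) + smul (pot (\<Sum>i\<in>UNIV. sc (c i) (q i)) (\<Sum>i\<in>UNIV. sc (c i) (e i))) Tp k"
    by (simp add: smul_pot_left)
  finally show "smul Tp (\<lambda>l. ea (\<Sum>i\<in>UNIV. sc (c i) (e i)) l + (\<Sum>i\<in>UNIV. sc (c i) (h i l))) k
     = (\<Sum>i\<in>UNIV. sc (c i) (pdT i k)) + smul (pot (\<Sum>i\<in>UNIV. sc (c i) (q i)) (\<Sum>i\<in>UNIV. sc (c i) (e i))) Tp k" .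
qed


lemma holo_rinvI:
  assumes U: "open U" and A: "\<And>k. holo_mat (A k) U"
  shows "holo_mat (\<lambda>p. rinvI (\<lambda>k. A k p) n) U"
proof (induction "nat n" arbitrary: n rule: less_induct)
  case less
  show ?case
  proof (cases "n \<le> 0")
    case True
    have "holo_mat (\<lambda>p. if n < 0 then 0 else mat 1) U" by (rule holo_mat_const[OF U])
    then show ?thesis
      by (rule holo_mat_cong) (use True in \<open>simp add: rinvI.simps[of _ n]\<close>)
  next
    case False
    have "holo_mat (\<lambda>p. - (\<Sum>j\<in>{1..n}. A j p ** rinvI (\<lambda>k. A k p) (n - j))) U"
    proof (intro holo_mat_minus holo_mat_sum[OF U] holo_mat_mm A)
      fix j assume "j \<in> {1..n}"
      then have "nat (n - j) < nat n" by auto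
      then show "holo_mat (\<lambda>p. rinvI (\<lambda>k. A k p) (n - j)) U" by (rule less)
    qed
    then show ?thesis
      by (rule holo_mat_cong) (use False in \<open>simp add: rinvI.simps[of _ n]\<close>)
  qed
qed

lemma inv_comb:
  fixes J K :: "complex^'n^'n"
  assumes "J ** K = mat 1"
  shows "(\<Sum>\<alpha>\<in>UNIV. K$\<alpha>$i * (\<Sum>j\<in>UNIV. J$j$\<alpha> * f j)) = f i"
proof -
  have "(\<Sum>\<alpha>\<in>UNIV. K$\<alpha>$i * (\<Sum>j\<in>UNIV. J$j$\<alpha> * f j)) = (\<Sum>\<alpha>\<in>UNIV. \<Sum>j\<in>UNIV. J$j$\<alpha> * K$\<alpha>$i * f j)"
    by (simp add: sum_distrib_left algebra_simps)
  also have "\<dots> = (\<Sum>j\<in>UNIV. \<Sum>\<alpha>\<in>UNIV. J$j$\<alpha> * K$\<alpha>$i * f j)" by (rule sum.swap)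
  also have "\<dots> = (\<Sum>j\<in>UNIV. (J ** K)$j$i * f j)"
    by (simp add: matrix_matrix_mult_def sum_distrib_right)
  also have "\<dots> = (\<Sum>j\<in>UNIV. if j = i then f j else 0)"
    using assms by (intro sum.cong) (auto simp: mat_def)
  also have "\<dots> = f i" by simp
  finally show ?thesis .
qed

lemma inv_comb_mat:
  fixes J K :: "complex^'n^'n" and F :: "'n \<Rightarrow> 'n cmat"
  assumes "J ** K = mat 1"
  shows "(\<Sum>\<alpha>\<in>UNIV. sc (K$\<alpha>$i) (\<Sum>j\<in>UNIV. sc (J$j$\<alpha>) (F j))) = F i"
  using inv_comb[OF assms, of i "\<lambda>j. F j $ a $ b" for a b] by (simp add: vec_eq_iff)

lemma lincomb_R:
  fixes M :: "('n::finite) ser" and pdM :: "'n \<Rightarrow> 'n cmat" and q e :: "'n \<Rightarrow> 'n cmat" and c :: "'n \<Rightarrow> complex"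
  shows "- (\<Sum>i\<in>UNIV. sc (c i) (pdM i)) + smul M (pot (\<Sum>i\<in>UNIV. sc (c i) (q i)) (\<Sum>i\<in>UNIV. sc (c i) (e i))) k
      - smul (pot (\<Sum>i\<in>UNIV. sc (c i) (q i)) (\<Sum>i\<in>UNIV. sc (c i) (e i))) M k
    = (\<Sum>i\<in>UNIV. sc (c i) (- pdM i + smul M (pot (q i) (e i)) k - smul (pot (q i) (e i)) M k))"
  unfolding smul_pot_left smul_pot_right
  by (simp add: sc_sum_mm_left sc_sum_mm_right sc_add sc_diff sc_neg sum.distrib sum_subtractf sum_negf)

lemma Ax_sum: "Ax u \<alpha> x = (\<Sum>i\<in>UNIV. sc (jac u i \<alpha> x) (munit i))"
proof -
  have "(\<Sum>i\<in>UNIV. jac u i \<alpha> x * (if a = i \<and> c = i then 1 else 0)) = (\<Sum>i\<in>UNIV. if i = a then (if a = c then jac u a \<alpha> x else 0) else 0)"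
    for a c :: 'a by (rule sum.cong) auto
  then show ?thesis by (simp add: Ax_def vec_eq_iff munit_def)
qed


lemma phi_eq_lemma:
  fixes X U :: "(complex^'n) set" and u :: "complex^'n \<Rightarrow> complex^'n"
    and q :: "'n \<Rightarrow> complex^'n \<Rightarrow> ('n::finite) cmat" and T T' :: "int \<Rightarrow> complex^'n \<Rightarrow> 'n cmat"
  assumes X: "open X" and u: "\<forall>i. holo_n (\<lambda>x. u x $ i) X" and uXU: "u ` X \<subseteq> U"
    and dJ: "\<forall>x\<in>X. det (\<chi> i \<alpha>. jac u i \<alpha> x) \<noteq> 0"
    and dU: "dressing U q (\<lambda>i p. munit i) T"
    and dX: "dressing X (\<lambda>\<alpha> x. \<Sum>i\<in>UNIV. sc (jac u i \<alpha> x) (q i (u x))) (Ax u) T'"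
    and b: "diag_poly_inv b"
    and y0: "y0 \<in> X"
  shows "phi T' b y0 = phi T b (u y0)"
proof -
  obtain h where U0: "\<forall>p\<in>U. T 0 p = mat 1" and Uneg: "\<forall>k<0. \<forall>p\<in>U. T k p = 0"
    and Uholo: "\<forall>k. holo_mat (T k) U"
    and hdiag: "\<forall>j k p. is_diag (h j k p)" and hneg: "\<forall>j. \<forall>k<0. \<forall>p. h j k p = 0"
    and eqU: "\<forall>j. \<forall>p\<in>U. \<forall>k. pd (\<lambda>p'. T k p') j p + smul (pot (q j p) (munit j)) (\<lambda>l. T l p) k
           = smul (\<lambda>l. T l p) (\<lambda>l. (if l = -1 then - munit j else 0) + h j l p) k"
    using dU unfolding dressing_def by blast
  obtain h' where X0: "\<forall>p\<in>X. T' 0 p = mat 1" and Xneg: "\<forall>k<0. \<forall>p\<in>X. T' k p = 0"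
    and Xholo: "\<forall>k. holo_mat (T' k) X"
    and h'diag: "\<forall>j k p. is_diag (h' j k p)" and h'neg: "\<forall>j. \<forall>k<0. \<forall>p. h' j k p = 0"
    and eqX: "\<forall>j. \<forall>p\<in>X. \<forall>k. pd (\<lambda>p'. T' k p') j p
           + smul (pot (\<Sum>i\<in>UNIV. sc (jac u i j p) (q i (u p))) (Ax u j p)) (\<lambda>l. T' l p) k
           = smul (\<lambda>l. T' l p) (\<lambda>l. (if l = -1 then - Ax u j p else 0) + h' j l p) k"
    using dX unfolding dressing_def by blast
  have U: "open U" using holo_mat_open Uholo by blast
  have uy: "u y \<in> U" if "y \<in> X" for y using uXU that by blast
  have vTU: "vb 0 (\<lambda>k. T k p)" if "p \<in> U" for p using Uneg that by (simp add: vb_def)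
  have vTX: "vb 0 (\<lambda>k. T' k p)" if "p \<in> X" for p using Xneg that by (simp add: vb_def)
  define S where "S = (\<lambda>k y. T k (u y))"
  define Si where "Si = (\<lambda>k y. rinvI (\<lambda>m. T m (u y)) k)"
  define J where "J = (\<lambda>y. (\<chi> i \<alpha>. jac u i \<alpha> y) :: complex^'n^'n)"
  define P where "P = (\<lambda>\<alpha> y. pot (\<Sum>i\<in>UNIV. sc (jac u i \<alpha> y) (q i (u y))) (Ax u \<alpha> y))"
  define hh1 where "hh1 = (\<lambda>\<alpha> l y. \<Sum>i\<in>UNIV. sc (jac u i \<alpha> y) (h i l (u y)))"
  have "\<exists>D. vb 0 D \<and> D 0 = mat 1 \<and> (\<forall>k. is_diag (D k)) \<and> (\<lambda>k. T' k y0) = smul (\<lambda>k. S k y0) D"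
  proof (rule dress_unique[where Si=Si and dS="\<lambda>\<alpha> k y. \<Sum>j\<in>UNIV. sc (jac u j \<alpha> y) (pd (T k) j (u y))"
        and dSi="\<lambda>\<alpha> k y. \<Sum>j\<in>UNIV. sc (jac u j \<alpha> y) (pd (\<lambda>p. rinvI (\<lambda>m. T m p) k) j (u y))"
        and P=P and a="Ax u" and hs=hh1 and ht=h' and J=J, OF X])
    fix y assume y: "y \<in> X"
    note vS = vTU[OF uy[OF y]]
    have T0: "T 0 (u y) = mat 1" using U0 uy[OF y] by blast
    show "vb 0 (\<lambda>k. S k y) \<and> S 0 y = mat 1" using vS T0 by (simp add: S_def)
    show "smul (\<lambda>k. S k y) (\<lambda>k. Si k y) = sone \<and> smul (\<lambda>k. Si k y) (\<lambda>k. S k y) = sone \<and> vb 0 (\<lambda>k. Si k y)"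
      using sinv_vb0[OF vS T0] rinvI_right[OF vS T0] vb_rinvI by (simp add: S_def Si_def)
    show "vb 0 (\<lambda>k. T' k y) \<and> T' 0 y = mat 1" using vTX[OF y] X0 y by blast
    fix \<alpha> :: 'n and k :: int
    show "hpd (S k) \<alpha> y (\<Sum>j\<in>UNIV. sc (jac u j \<alpha> y) (pd (T k) j (u y)))"
      unfolding S_def using chain_hpd[OF spec[OF Uholo, of k] u y uy[OF y]] .
    show "hpd (Si k) \<alpha> y (\<Sum>j\<in>UNIV. sc (jac u j \<alpha> y) (pd (\<lambda>p. rinvI (\<lambda>m. T m p) k) j (u y)))"
      unfolding Si_def using chain_hpd[OF holo_rinvI[OF U spec[OF Uholo]] u y uy[OF y]] .
    show "hpd (T' k) \<alpha> y (pd (T' k) \<alpha> y)" using holo_mat_hpd[OF spec[OF Xholo] y] .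
  next
    fix y \<alpha> assume y: "y \<in> X"
    note vS = vTU[OF uy[OF y]]
    have E: "pd (T k) i (u y) + smul (pot (q i (u y)) (munit i)) (\<lambda>k. T k (u y)) k
        = smul (\<lambda>k. T k (u y)) (\<lambda>l. (if l = -1 then - munit i else 0) + h i l (u y)) k" for i k
      using eqU uy[OF y] by auto
    have vh: "vb 0 (\<lambda>l. h i l (u y))" for i using hneg by (simp add: vb_def)
    show "smul (\<lambda>k. S k y) (\<lambda>l. ea (Ax u \<alpha> y) l + hh1 \<alpha> l y)
        = (\<lambda>k. (\<Sum>j\<in>UNIV. sc (jac u j \<alpha> y) (pd (T k) j (u y))) + smul (P \<alpha> y) (\<lambda>k. S k y) k)"
      unfolding S_def hh1_def P_def Ax_sum
      by (rule lincomb_dressing[where pdT="\<lambda>i k. pd (T k) i (u y)" and h="\<lambda>i l. h i l (u y)", OF vS vh E])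
    show "smul (\<lambda>k. T' k y) (\<lambda>l. ea (Ax u \<alpha> y) l + h' \<alpha> l y) = (\<lambda>k. pd (T' k) \<alpha> y + smul (P \<alpha> y) (\<lambda>k. T' k y) k)"
      using eqX y unfolding P_def ea_if[symmetric] by auto
  next
    fix \<alpha> y show "vb (-1) (P \<alpha> y)" by (simp add: P_def vb_pot)
  next
    fix \<alpha> y show "vb 0 (\<lambda>l. hh1 \<alpha> l y)" using hneg by (simp add: hh1_def vb_def vec_eq_iff)
  next
    fix \<alpha> l y show "is_diag (hh1 \<alpha> l y)" unfolding hh1_def using hdiag by (intro is_diag_sum is_diag_sc) auto
  next
    fix \<alpha> y show "vb 0 (\<lambda>l. h' \<alpha> l y)" using h'neg by (simp add: vb_def)
  next
    fix \<alpha> l y show "is_diag (h' \<alpha> l y)" using h'diag by auto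
  next
    fix \<alpha> y c d show "Ax u \<alpha> y $ c $ d = (if c = d then J y $ c $ \<alpha> else 0)" by (simp add: Ax_def J_def)
  next
    fix y assume "y \<in> X" then show "det (J y) \<noteq> 0" using dJ by (simp add: J_def)
  next
    show "y0 \<in> X" by fact
  qed
  then obtain D where D: "vb 0 D" "D 0 = mat 1" "\<And>k. is_diag (D k)" "(\<lambda>k. T' k y0) = smul (\<lambda>k. S k y0) D"
    by blast
  have "phi T' b y0 = smul (smul (smul (\<lambda>k. S k y0) D) b) (sinv (smul (\<lambda>k. S k y0) D))"
    unfolding phi_def D(4) ..
  also have "\<dots> = smul (smul (\<lambda>k. S k y0) b) (sinv (\<lambda>k. S k y0))"
    by (rule phi_diag_eq[OF _ _ D(1,2,3) b]) (use vTU[OF uy[OF y0]] U0 uy[OF y0] in \<open>auto simp: S_def\<close>)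
  also have "\<dots> = phi T b (u y0)" by (simp add: phi_def S_def)
  finally show ?thesis .
qed


lemma R_rel:
  fixes X U :: "(complex^'n) set" and u :: "complex^'n \<Rightarrow> complex^'n"
    and q :: "'n \<Rightarrow> complex^'n \<Rightarrow> ('n::finite) cmat" and T T' :: "int \<Rightarrow> complex^'n \<Rightarrow> 'n cmat"
  assumes X: "open X" and u: "\<forall>i. holo_n (\<lambda>x. u x $ i) X" and uXU: "u ` X \<subseteq> U"
    and dU: "dressing U q (\<lambda>i p. munit i) T"
    and b: "diag_poly_inv b"
    and ph: "\<And>y. y \<in> X \<Longrightarrow> phi T' b y = phi T b (u y)"
    and y: "y \<in> X"
  shows "- pd (\<lambda>p'. trunc0 (phi T' b p') k) \<alpha> y
      + smul (trunc0 (phi T' b y)) (pot (\<Sum>i\<in>UNIV. sc (jac u i \<alpha> y) (q i (u y))) (Ax u \<alpha> y)) k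
      - smul (pot (\<Sum>i\<in>UNIV. sc (jac u i \<alpha> y) (q i (u y))) (Ax u \<alpha> y)) (trunc0 (phi T' b y)) k
    = (\<Sum>i\<in>UNIV. sc (jac u i \<alpha> y) (- pd (\<lambda>p'. trunc0 (phi T b p') k) i (u y)
      + smul (trunc0 (phi T b (u y))) (pot (q i (u y)) (munit i)) k
      - smul (pot (q i (u y)) (munit i)) (trunc0 (phi T b (u y))) k))"
proof -
  have U0: "\<forall>p\<in>U. T 0 p = mat 1" and Uneg: "\<forall>k<0. \<forall>p\<in>U. T k p = 0"
    and Uholo: "\<forall>k. holo_mat (T k) U"
    using dU unfolding dressing_def by blast+
  have U: "open U" using holo_mat_open Uholo by blast
  obtain Nb0 where "vb Nb0 b" using b by (auto simp: diag_poly_inv_def lbdd_vb)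
  define Nb where "Nb = min Nb0 0"
  have Nb: "vb Nb b" "Nb \<le> 0" using \<open>vb Nb0 b\<close> by (auto simp: Nb_def intro: vb_mono)
  define G where "G = (\<lambda>p. if k \<le> 0 then (\<Sum>j\<in>{Nb..k}. (\<Sum>l\<in>{0..j - Nb}. T l p ** b (j - l)) ** rinvI (\<lambda>m. T m p) (k - j)) else 0)"
  have Gholo: "holo_mat G U"
  proof (cases "k \<le> 0")
    case True
    have "holo_mat (\<lambda>p. \<Sum>j\<in>{Nb..k}. (\<Sum>l\<in>{0..j - Nb}. T l p ** b (j - l)) ** rinvI (\<lambda>m. T m p) (k - j)) U"
      by (intro holo_mat_sum[OF U] holo_mat_mm holo_rinvI[OF U] holo_mat_const[OF U] spec[OF Uholo])
    then show ?thesis using True by (simp add: G_def)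
  next
    case False then show ?thesis using holo_mat_const[OF U, of 0] by (simp add: G_def)
  qed
  have Geq: "trunc0 (phi T b p) k = G p" if p: "p \<in> U" for p
  proof (cases "k \<le> 0")
    case True
    have vT: "vb 0 (\<lambda>k. T k p)" using Uneg p by (simp add: vb_def)
    have T0: "T 0 p = mat 1" using U0 p by blast
    have vTb: "vb Nb (smul (\<lambda>k. T k p) b)" using vb_smul[OF vT Nb(1)] by simp
    have "phi T b p k = smul (smul (\<lambda>k. T k p) b) (rinvI (\<lambda>m. T m p)) k"
      by (simp add: phi_def sinv_vb0[OF vT T0])
    also have "\<dots> = (\<Sum>j\<in>{Nb..k}. smul (\<lambda>k. T k p) b j ** rinvI (\<lambda>m. T m p) (k - j))"
      using smul_vb[OF vTb vb_rinvI] by simp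
    also have "\<dots> = (\<Sum>j\<in>{Nb..k}. (\<Sum>l\<in>{0..j - Nb}. T l p ** b (j - l)) ** rinvI (\<lambda>m. T m p) (k - j))"
      by (simp add: smul_vb[OF vT Nb(1)])
    finally show ?thesis using True by (simp add: trunc0_def G_def)
  next
    case False then show ?thesis by (simp add: trunc0_def G_def)
  qed
  have uy: "u y \<in> U" using uXU y by blast
  have pdX: "pd (\<lambda>p'. trunc0 (phi T' b p') k) \<alpha> y = (\<Sum>j\<in>UNIV. sc (jac u j \<alpha> y) (pd (\<lambda>p'. trunc0 (phi T b p') k) j (u y)))"
  proof -
    have "pd (\<lambda>p'. trunc0 (phi T' b p') k) \<alpha> y = pd (\<lambda>p'. G (u p')) \<alpha> y"
      by (rule pd_cong[OF X y]) (use ph uXU Geq in auto)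
    also have "\<dots> = (\<Sum>j\<in>UNIV. sc (jac u j \<alpha> y) (pd G j (u y)))"
      by (rule hpd_pd[OF chain_hpd[OF Gholo u y uy]])
    also have "\<dots> = (\<Sum>j\<in>UNIV. sc (jac u j \<alpha> y) (pd (\<lambda>p'. trunc0 (phi T b p') k) j (u y)))"
    proof -
      have "pd G j (u y) = pd (\<lambda>p'. trunc0 (phi T b p') k) j (u y)" for j
        by (rule pd_cong[OF U uy]) (use Geq in auto)
      then show ?thesis by simp
    qed
    finally show ?thesis .
  qed
  show ?thesis
    unfolding pdX ph[OF y] Ax_sum
    by (rule lincomb_R)
qed


lemma sc_zero: "sc c 0 = 0" by (simp add: sc_def vec_eq_iff)

theorem mainTheorem5:
  fixes X U :: "(complex^'n) set" and Th :: "complex set"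
    and u :: "complex^'n \<Rightarrow> complex^'n"
    and q :: "'n \<Rightarrow> complex^'n \<Rightarrow> complex \<Rightarrow> 'n cmat"
    and T T' :: "complex \<Rightarrow> int \<Rightarrow> complex^'n \<Rightarrow> 'n cmat"
    and b :: "'n ser"
  assumes "open X" and "connected X" and "open Th"
    and "\<forall>i. holo_n (\<lambda>x. u x $ i) X" and "inj_on u X" and "u ` X = U"
    and "\<forall>x\<in>X. det (\<chi> i \<alpha>. jac u i \<alpha> x) \<noteq> 0"
    and "\<forall>i. \<forall>t\<in>Th. holo_mat (\<lambda>p. q i p t) U"
    and "\<forall>t\<in>Th. commuting U (\<lambda>i p. q i p t) (\<lambda>i p. munit i)"
    and "\<forall>t\<in>Th. dressing U (\<lambda>i p. q i p t) (\<lambda>i p. munit i) (T t)"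
    and "\<forall>t\<in>Th. dressing X (\<lambda>\<alpha> x. Qx u q \<alpha> x t) (Ax u) (T' t)"
    and "diag_poly_inv b"
  shows "flow U Th q (\<lambda>i p. munit i) T b \<longleftrightarrow> flow X Th (Qx u q) (Ax u) T' b"
proof -
  define J where "J = (\<lambda>y. (\<chi> i \<alpha>. jac u i \<alpha> y) :: complex^'n^'n)"
  define RU where "RU = (\<lambda>i p t k. - pd (\<lambda>p'. trunc0 (phi (T t) b p') k) i p
      + smul (trunc0 (phi (T t) b p)) (pot (q i p t) (munit i)) k
      - smul (pot (q i p t) (munit i)) (trunc0 (phi (T t) b p)) k)"
  define RX where "RX = (\<lambda>\<alpha> y t k. - pd (\<lambda>p'. trunc0 (phi (T' t) b p') k) \<alpha> y
      + smul (trunc0 (phi (T' t) b y)) (pot (Qx u q \<alpha> y t) (Ax u \<alpha> y)) k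
      - smul (pot (Qx u q \<alpha> y t) (Ax u \<alpha> y)) (trunc0 (phi (T' t) b y)) k)"
  have fU: "flow U Th q (\<lambda>i p. munit i) T b \<longleftrightarrow> (\<forall>i. \<forall>p\<in>U. \<forall>t\<in>Th.
      (\<forall>a c. ((\<lambda>s. q i p s $ a $ c) has_field_derivative RU i p t 0 $ a $ c) (at t)) \<and> (\<forall>k. k \<noteq> 0 \<longrightarrow> RU i p t k = 0))"
    by (simp add: flow_def Let_def RU_def)
  have fX: "flow X Th (Qx u q) (Ax u) T' b \<longleftrightarrow> (\<forall>\<alpha>. \<forall>y\<in>X. \<forall>t\<in>Th.
      (\<forall>a c. ((\<lambda>s. Qx u q \<alpha> y s $ a $ c) has_field_derivative RX \<alpha> y t 0 $ a $ c) (at t)) \<and> (\<forall>k. k \<noteq> 0 \<longrightarrow> RX \<alpha> y t k = 0))"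
    by (simp add: flow_def Let_def RX_def)
  have Qx_eq: "Qx u q \<alpha> y s = (\<Sum>i\<in>UNIV. sc (jac u i \<alpha> y) (q i (u y) s))" for \<alpha> y s
    by (simp add: Qx_def)
  have Qx_ent: "Qx u q \<alpha> y s $ a $ c = (\<Sum>i\<in>UNIV. jac u i \<alpha> y * q i (u y) s $ a $ c)" for \<alpha> y s a c
    by (simp add: Qx_def)
  have uXU: "u ` X \<subseteq> U" using assms(6) by blast
  have key: "RX \<alpha> y t k = (\<Sum>i\<in>UNIV. sc (jac u i \<alpha> y) (RU i (u y) t k))" if t: "t \<in> Th" and y: "y \<in> X" for \<alpha> y t k
  proof -
    have dU: "dressing U (\<lambda>i p. q i p t) (\<lambda>i p. munit i) (T t)" using assms(10) t by blast
    have dX: "dressing X (\<lambda>\<alpha> x. \<Sum>i\<in>UNIV. sc (jac u i \<alpha> x) (q i (u x) t)) (Ax u) (T' t)"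
      using assms(11) t by (simp add: Qx_def)
    have ph: "phi (T' t) b y' = phi (T t) b (u y')" if "y' \<in> X" for y'
      by (rule phi_eq_lemma[OF assms(1) assms(4) uXU assms(7) dU dX assms(12) that])
    show ?thesis unfolding RX_def RU_def Qx_eq
      by (rule R_rel[OF assms(1) assms(4) uXU dU assms(12) ph y])
  qed
  show ?thesis
  proof
    assume FU0: "flow U Th q (\<lambda>i p. munit i) T b"
    have FU: "\<And>i p t. p \<in> U \<Longrightarrow> t \<in> Th \<Longrightarrow>
      (\<forall>a c. ((\<lambda>s. q i p s $ a $ c) has_field_derivative RU i p t 0 $ a $ c) (at t)) \<and> (\<forall>k. k \<noteq> 0 \<longrightarrow> RU i p t k = 0)"
      using FU0 unfolding fU by blast
    show "flow X Th (Qx u q) (Ax u) T' b"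
      unfolding fX
    proof (intro allI ballI conjI impI)
      fix \<alpha> y t assume y: "y \<in> X" and t: "t \<in> Th"
      have uy: "u y \<in> U" using uXU y by blast
      show "RX \<alpha> y t k = 0" if "k \<noteq> 0" for k
        using key[OF t y] FU[OF uy t] that by (simp add: sc_zero)
      fix a c
      have "((\<lambda>s. \<Sum>i\<in>UNIV. jac u i \<alpha> y * q i (u y) s $ a $ c) has_field_derivative
          (\<Sum>i\<in>UNIV. jac u i \<alpha> y * RU i (u y) t 0 $ a $ c)) (at t)"
        by (intro DERIV_sum DERIV_cmult) (use FU[OF uy t] in blast)
      then show "((\<lambda>s. Qx u q \<alpha> y s $ a $ c) has_field_derivative RX \<alpha> y t 0 $ a $ c) (at t)"
        by (simp add: key[OF t y] Qx_ent)
    qed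
  next
    assume FX0: "flow X Th (Qx u q) (Ax u) T' b"
    have FX: "\<And>\<alpha> y t. y \<in> X \<Longrightarrow> t \<in> Th \<Longrightarrow>
      (\<forall>a c. ((\<lambda>s. Qx u q \<alpha> y s $ a $ c) has_field_derivative RX \<alpha> y t 0 $ a $ c) (at t)) \<and> (\<forall>k. k \<noteq> 0 \<longrightarrow> RX \<alpha> y t k = 0)"
      using FX0 unfolding fX by blast
    show "flow U Th q (\<lambda>i p. munit i) T b"
      unfolding fU
    proof (intro allI ballI conjI impI)
      fix i p t assume p: "p \<in> U" and t: "t \<in> Th"
      obtain y where y: "y \<in> X" "p = u y" using assms(6) p by blast
      have "invertible (J y)" using assms(7) y by (simp add: invertible_det_nz J_def)
      then obtain K where K: "J y ** K = mat 1" using invertible_right_inverse by blast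
      have RUeq: "RU i p t k = (\<Sum>\<alpha>\<in>UNIV. sc (K$\<alpha>$i) (RX \<alpha> y t k))" for k
      proof -
        have "RU i p t k = (\<Sum>\<alpha>\<in>UNIV. sc (K$\<alpha>$i) (\<Sum>j\<in>UNIV. sc (J y$j$\<alpha>) (RU j p t k)))"
          using inv_comb_mat[OF K, of i "\<lambda>j. RU j p t k"] by simp
        also have "\<dots> = (\<Sum>\<alpha>\<in>UNIV. sc (K$\<alpha>$i) (RX \<alpha> y t k))"
          by (simp add: key[OF t y(1)] y(2) J_def)
        finally show ?thesis .
      qed
      show "RU i p t k = 0" if "k \<noteq> 0" for k
        using RUeq[of k] FX[OF y(1) t] that by (simp add: sc_zero)
      fix a c
      have qeq: "q i p s $ a $ c = (\<Sum>\<alpha>\<in>UNIV. K$\<alpha>$i * (Qx u q \<alpha> y s $ a $ c))" for s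
        using inv_comb[OF K, of i "\<lambda>j. q j p s $ a $ c"] by (simp add: Qx_ent y(2) J_def)
      have "((\<lambda>s. \<Sum>\<alpha>\<in>UNIV. K$\<alpha>$i * (Qx u q \<alpha> y s $ a $ c)) has_field_derivative
          (\<Sum>\<alpha>\<in>UNIV. K$\<alpha>$i * (RX \<alpha> y t 0 $ a $ c))) (at t)"
        by (intro DERIV_sum DERIV_cmult) (use FX[OF y(1) t] in blast)
      then show "((\<lambda>s. q i p s $ a $ c) has_field_derivative RU i p t 0 $ a $ c) (at t)"
        by (simp add: qeq RUeq)
    qed
  qed
qed


end
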